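(* Let $l_0,l_1,l_2$ be pairwise coprime with $1\le l_0\le l_1\le l_2$, $G=x_0^{l_1l_2}+x_1^{l_0l_2}+x_2^{l_0l_1}$, and let $\lambda,\mu,\gamma\in\mathbb{C}$ be $\mathbb{Z}$-linearly independent. Let $\mathcal{F}_0$ be the foliation on $\mathbb{P}(l_0,l_1,l_2)$ (of normal degree $l_0l_1l_2+l_0+l_1+l_2$) induced by $$\beta=x_0x_1x_2G\left(\lambda l_1l_2\frac{dx_0}{x_0}+\mu l_0l_2\frac{dx_1}{x_1}+\gamma l_0l_1\frac{dx_2}{x_2}-(\lambda+\mu+\gamma)\frac{dG}{G}\right).$$ Then there are singularities of $\mathcal{F}_0$ in $\mathbb{P}(l_0,l_1,l_2)\setminus\{x_0x_1x_2=0\}$ through which no $\mathcal{F}_0$-invariant algebraic curve passes.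
   Context: $\mathbb{P}(l_0,l_1,l_2)$ is the quotient of $\mathbb{C}^3\setminus\{0\}$ by $t\cdot(x_0,x_1,x_2)=(t^{l_0}x_0,t^{l_1}x_1,t^{l_2}x_2)$. A foliation is the class of a 1-form $\omega=\sum A_idx_i$ with $A_i$ quasi-homogeneous of degree $d-l_i$ and $\sum l_ix_iA_i=0$; its singularities are the points where $\omega$ vanishes. An algebraic curve is the zero set of a nonconstant quasi-homogeneous polynomial $F$; it is invariant if $\omega\wedge dF=F\Theta$ for some polynomial 2-form $\Theta$. *)

theory Defs
  imports Complex_Main
begin

(* Polynomials in C[x0,x1,x2], represented by their coefficient functions on
   exponent triples (a,b,c) (monomial x0^a x1^b x2^c), with finite support. *)
type_synonym mono3 = "nat \<times> nat \<times> nat"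
type_synonym poly3 = "mono3 \<Rightarrow> complex"

definition is_poly3 :: "poly3 \<Rightarrow> bool" where
  "is_poly3 P \<longleftrightarrow> finite {m. P m \<noteq> 0}"

definition eval3 :: "poly3 \<Rightarrow> complex \<Rightarrow> complex \<Rightarrow> complex \<Rightarrow> complex" where
  "eval3 P z0 z1 z2 = (\<Sum>(a,b,c)\<in>{m. P m \<noteq> 0}. P (a,b,c) * z0^a * z1^b * z2^c)"

definition monom3 :: "mono3 \<Rightarrow> poly3" where
  "monom3 m = (\<lambda>n. if n = m then 1 else 0)"

definition add3 :: "poly3 \<Rightarrow> poly3 \<Rightarrow> poly3" where
  "add3 P Q = (\<lambda>m. P m + Q m)"

definition smult3 :: "complex \<Rightarrow> poly3 \<Rightarrow> poly3" where
  "smult3 c P = (\<lambda>m. c * P m)"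

definition mult3 :: "poly3 \<Rightarrow> poly3 \<Rightarrow> poly3" where
  "mult3 P Q = (\<lambda>(a,b,c). \<Sum>i\<le>a. \<Sum>j\<le>b. \<Sum>k\<le>c. P (i,j,k) * Q (a-i, b-j, c-k))"

definition pderiv3 :: "nat \<Rightarrow> poly3 \<Rightarrow> poly3" where
  "pderiv3 i P = (\<lambda>(a,b,c).
     if i = 0 then of_nat (a+1) * P (a+1,b,c)
     else if i = 1 then of_nat (b+1) * P (a,b+1,c)
     else of_nat (c+1) * P (a,b,c+1))"

definition quasi_hom3 :: "nat \<Rightarrow> nat \<Rightarrow> nat \<Rightarrow> nat \<Rightarrow> poly3 \<Rightarrow> bool" where
  "quasi_hom3 l0 l1 l2 d P \<longleftrightarrow> is_poly3 P \<and>
     (\<forall>a b c. P (a,b,c) \<noteq> 0 \<longrightarrow> l0*a + l1*b + l2*c = d)"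

definition nonconstant3 :: "poly3 \<Rightarrow> bool" where
  "nonconstant3 P \<longleftrightarrow> (\<exists>m. m \<noteq> (0,0,0) \<and> P m \<noteq> 0)"

(* singular point (affine representative in C^3 \ {0}) of the foliation
   omega = A 0 dx0 + A 1 dx1 + A 2 dx2 *)
definition fol_singular :: "(nat \<Rightarrow> poly3) \<Rightarrow> complex \<Rightarrow> complex \<Rightarrow> complex \<Rightarrow> bool" where
  "fol_singular A z0 z1 z2 \<longleftrightarrow> (z0, z1, z2) \<noteq> (0, 0, 0) \<and>
     (\<forall>i\<le>2. eval3 (A i) z0 z1 z2 = 0)"

(* F defines an invariant algebraic curve of omega = sum A i dx_i:
   F nonconstant quasi-homogeneous and omega \<and> dF = F Theta for a polynomial
   2-form Theta; the coefficient of dx_i \<and> dx_j (i<j) of omega \<and> dF is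
   A_i dF/dx_j - A_j dF/dx_i. *)
definition invariant_curve ::
  "nat \<Rightarrow> nat \<Rightarrow> nat \<Rightarrow> (nat \<Rightarrow> poly3) \<Rightarrow> poly3 \<Rightarrow> bool" where
  "invariant_curve l0 l1 l2 A F \<longleftrightarrow>
     (\<exists>d. quasi_hom3 l0 l1 l2 d F) \<and> nonconstant3 F \<and>
     (\<forall>i j. i < j \<and> j \<le> 2 \<longrightarrow>
        (\<exists>\<Theta>. is_poly3 \<Theta> \<and>
           add3 (mult3 (A i) (pderiv3 j F)) (smult3 (-1) (mult3 (A j) (pderiv3 i F)))
             = mult3 F \<Theta>))"

definition Gpoly :: "nat \<Rightarrow> nat \<Rightarrow> nat \<Rightarrow> poly3" where
  "Gpoly l0 l1 l2 = add3 (monom3 (l1*l2, 0, 0))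
      (add3 (monom3 (0, l0*l2, 0)) (monom3 (0, 0, l0*l1)))"

(* components of
   beta = x0 x1 x2 G (lam l1 l2 dx0/x0 + mu l0 l2 dx1/x1 + gam l0 l1 dx2/x2
                        - (lam+mu+gam) dG/G)
        = sum_i [ c_i (x0x1x2/x_i) G - (lam+mu+gam) x0x1x2 dG/dx_i ] dx_i *)
definition beta_fol ::
  "nat \<Rightarrow> nat \<Rightarrow> nat \<Rightarrow> complex \<Rightarrow> complex \<Rightarrow> complex \<Rightarrow> nat \<Rightarrow> poly3" where
  "beta_fol l0 l1 l2 lam mu gam i =
     (let G = Gpoly l0 l1 l2;
          c = (if i = 0 then lam * of_nat (l1*l2)
               else if i = 1 then mu * of_nat (l0*l2) else gam * of_nat (l0*l1));
          e = (if i = 0 then (0,1,1) else if i = 1 then (1,0,1) else (1,1,0))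
      in add3 (smult3 c (mult3 (monom3 e) G))
              (smult3 (-(lam+mu+gam)) (mult3 (monom3 (1,1,1)) (pderiv3 i G))))"

end

theory Submission imports Defs "HOL-Computational_Algebra.Polynomial" begin


type_synonym P3 = "complex poly poly poly"

definition c3 :: "P3 \<Rightarrow> mono3 \<Rightarrow> complex" where
  "c3 Q m = (case m of (a,b,c) \<Rightarrow> coeff (coeff (coeff Q a) b) c)"

lemma c3_simp: "c3 Q (a,b,c) = coeff (coeff (coeff Q a) b) c"
  by (simp add: c3_def)

lemma P3_eqI: assumes "\<And>a b c. c3 Q (a,b,c) = c3 R (a,b,c)" shows "Q = R"
  using assms by (simp add: poly_eq_iff c3_simp)

lemma c3_add[simp]: "c3 (Q + R) m = c3 Q m + c3 R m"
  by (cases m) (simp add: c3_simp)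
lemma c3_diff[simp]: "c3 (Q - R) m = c3 Q m - c3 R m"
  by (cases m) (simp add: c3_simp)
lemma c3_uminus[simp]: "c3 (- Q) m = - c3 Q m"
  by (cases m) (simp add: c3_simp)
lemma c3_zero[simp]: "c3 0 m = 0"
  by (cases m) (simp add: c3_simp)
lemma c3_sum: "c3 (\<Sum>x\<in>A. f x) m = (\<Sum>x\<in>A. c3 (f x) m)"
  by (cases m) (simp add: coeff_sum c3_simp)
lemma c3_mult: "c3 (Q * R) (a,b,c) =
   (\<Sum>i\<le>a. \<Sum>j\<le>b. \<Sum>k\<le>c. c3 Q (i,j,k) * c3 R (a-i,b-j,c-k))"
  by (simp add: coeff_mult coeff_sum c3_simp)

definition mono3p :: "mono3 \<Rightarrow> P3" where
  "mono3p m = (case m of (a,b,c) \<Rightarrow> monom (monom (monom 1 c) b) a)"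

lemma c3_mono3p: "c3 (mono3p m) n = (if n = m then 1 else 0)"
  by (cases m; cases n) (auto simp: mono3p_def coeff_monom c3_simp)

lemma c3_mono3p_mult: "c3 (mono3p (a,b,c) * R) (i,j,k) =
  (if a \<le> i \<and> b \<le> j \<and> c \<le> k then c3 R (i-a,j-b,k-c) else 0)"
  by (simp add: mono3p_def coeff_monom_mult c3_simp)

lemma mono3p_mult: "mono3p (a,b,c) * mono3p (a',b',c') = mono3p (a+a',b+b',c+c')"
  by (rule P3_eqI) (auto simp: c3_mono3p_mult c3_mono3p)

lemma mono3p_0: "mono3p (0,0,0) = 1"
  by (simp add: mono3p_def monom_0 one_pCons)

definition const3 :: "complex \<Rightarrow> P3" where
  "const3 c = [:[:[:c:]:]:]"

lemma c3_const3_mult[simp]: "c3 (const3 x * R) m = x * c3 R m"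
  by (cases m) (simp add: const3_def c3_simp)

lemma c3_const3: "c3 (const3 x) m = (if m = (0,0,0) then x else 0)"
  by (cases m) (auto simp: const3_def coeff_pCons c3_simp split: nat.splits)

lemma const3_mult: "const3 (x*y) = const3 x * const3 y"
  by (rule P3_eqI) (simp add: c3_const3)
lemma const3_add: "const3 (x+y) = const3 x + const3 y"
  by (rule P3_eqI) (simp add: c3_const3)
lemma const3_diff: "const3 (x-y) = const3 x - const3 y"
  by (rule P3_eqI) (simp add: c3_const3)
lemma const3_uminus: "const3 (-x) = - const3 x"
  by (rule P3_eqI) (simp add: c3_const3)
lemma const3_1[simp]: "const3 1 = 1"
  by (simp add: const3_def one_pCons)
lemma const3_0[simp]: "const3 0 = 0"
  by (rule P3_eqI) (simp add: c3_const3)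
lemma const3_of_nat: "const3 (of_nat n) = of_nat n"
  by (induction n) (simp_all add: const3_add)

definition fromc :: "poly3 \<Rightarrow> P3" where
  "fromc P = (\<Sum>m\<in>{m. P m \<noteq> 0}. const3 (P m) * mono3p m)"

lemma c3_fromc: assumes "is_poly3 P" shows "c3 (fromc P) m = P m"
proof -
  have "c3 (fromc P) m = (\<Sum>m'\<in>{m. P m \<noteq> 0}. P m' * (if m = m' then 1 else 0))"
    by (simp add: fromc_def c3_sum c3_mono3p)
  also have "\<dots> = P m"
    using assms by (simp add: is_poly3_def if_distrib sum.delta cong: if_cong)
  finally show ?thesis .
qed

lemma fin_c3: "finite {m. c3 Q m \<noteq> 0}"
proof -
  have "{m. c3 Q m \<noteq> 0} \<subseteq> (\<Union>a\<in>{..degree Q}. \<Union>b\<in>{..degree (coeff Q a)}.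
          \<Union>c\<in>{..degree (coeff (coeff Q a) b)}. {(a,b,c)})"
  proof
    fix m assume "m \<in> {m. c3 Q m \<noteq> 0}"
    then obtain a b c where m: "m = (a,b,c)" and nz: "coeff (coeff (coeff Q a) b) c \<noteq> 0"
      by (cases m) (auto simp: c3_simp)
    have "c \<le> degree (coeff (coeff Q a) b)" using nz by (rule le_degree)
    moreover have "coeff (coeff Q a) b \<noteq> 0" using nz by auto
    hence "b \<le> degree (coeff Q a)" by (rule le_degree)
    moreover have "coeff Q a \<noteq> 0" using nz by auto
    hence "a \<le> degree Q" by (rule le_degree)
    ultimately show "m \<in> (\<Union>a\<in>{..degree Q}. \<Union>b\<in>{..degree (coeff Q a)}.
          \<Union>c\<in>{..degree (coeff (coeff Q a) b)}. {(a,b,c)})" using m by blast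
  qed
  moreover have "finite (\<Union>a\<in>{..degree Q}. \<Union>b\<in>{..degree (coeff Q a)}.
          \<Union>c\<in>{..degree (coeff (coeff Q a) b)}. {(a,b,c)})" by auto
  ultimately show ?thesis by (rule finite_subset)
qed

lemma is_poly3_c3[simp]: "is_poly3 (c3 Q)"
  by (simp add: is_poly3_def fin_c3)

lemma fromc_c3[simp]: "fromc (c3 Q) = Q"
  by (rule P3_eqI) (simp add: c3_fromc)

lemma fromc_superset:
  assumes "finite S" "{m. P m \<noteq> 0} \<subseteq> S"
  shows "fromc P = (\<Sum>m\<in>S. const3 (P m) * mono3p m)"
  unfolding fromc_def by (rule sum.mono_neutral_left) (use assms in auto)



lemma rep_add: assumes "is_poly3 P" "is_poly3 Q"
  shows "add3 P Q = c3 (fromc P + fromc Q)"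
  using assms by (auto simp: add3_def c3_fromc)

lemma rep_smult: assumes "is_poly3 P"
  shows "smult3 x P = c3 (const3 x * fromc P)"
  using assms by (auto simp: smult3_def c3_fromc)

lemma rep_mult: assumes "is_poly3 P" "is_poly3 Q"
  shows "mult3 P Q = c3 (fromc P * fromc Q)"
proof
  fix m :: mono3
  obtain a b c where m: "m = (a,b,c)" by (cases m)
  show "mult3 P Q m = c3 (fromc P * fromc Q) m"
    using assms by (simp add: m mult3_def c3_mult c3_fromc)
qed

lemma rep_monom: "monom3 m = c3 (mono3p m)"
  by (auto simp: monom3_def c3_mono3p)

lemma is_poly3_pderiv3: assumes "is_poly3 P" shows "is_poly3 (pderiv3 i P)"
proof -
  let ?S = "{m. P m \<noteq> 0}"
  have "{m. pderiv3 i P m \<noteq> 0} \<subseteq> (\<lambda>(a,b,c). (a-1,b,c)) ` ?S \<union> (\<lambda>(a,b,c). (a,b-1,c)) ` ?S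
        \<union> (\<lambda>(a,b,c). (a,b,c-1)) ` ?S"
  proof
    fix m assume "m \<in> {m. pderiv3 i P m \<noteq> 0}"
    then obtain a b c where m: "m = (a,b,c)" and nz: "pderiv3 i P (a,b,c) \<noteq> 0"
      by (cases m) auto
    show "m \<in> (\<lambda>(a,b,c). (a-1,b,c)) ` ?S \<union> (\<lambda>(a,b,c). (a,b-1,c)) ` ?S
        \<union> (\<lambda>(a,b,c). (a,b,c-1)) ` ?S"
    proof (cases "i = 0")
      case True
      with nz have "P (a+1,b,c) \<noteq> 0" by (auto simp: pderiv3_def)
      hence "(a+1,b,c) \<in> ?S" by simp
      hence "(\<lambda>(a,b,c). (a-1,b,c)) (a+1,b,c) \<in> (\<lambda>(a,b,c). (a-1,b,c)) ` ?S" by (rule imageI)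
      thus ?thesis using m by auto
    next
      case F0: False
      show ?thesis
      proof (cases "i = 1")
        case True
        with nz have "P (a,b+1,c) \<noteq> 0" by (auto simp: pderiv3_def)
        hence "(a,b+1,c) \<in> ?S" by simp
        hence "(\<lambda>(a,b,c). (a,b-1,c)) (a,b+1,c) \<in> (\<lambda>(a,b,c). (a,b-1,c)) ` ?S" by (rule imageI)
        thus ?thesis using m by auto
      next
        case False
        with F0 nz have "P (a,b,c+1) \<noteq> 0" by (auto simp: pderiv3_def)
        hence "(a,b,c+1) \<in> ?S" by simp
        hence "(\<lambda>(a,b,c). (a,b,c-1)) (a,b,c+1) \<in> (\<lambda>(a,b,c). (a,b,c-1)) ` ?S" by (rule imageI)
        thus ?thesis using m by auto
      qed
    qed
  qed
  moreover have "finite ?S" using assms by (simp add: is_poly3_def)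
  ultimately show ?thesis unfolding is_poly3_def by (meson finite_Un finite_imageI finite_subset)
qed

definition Dp :: "nat \<Rightarrow> P3 \<Rightarrow> P3" where
  "Dp i Q = fromc (pderiv3 i (c3 Q))"

lemma c3_Dp: "c3 (Dp i Q) = pderiv3 i (c3 Q)"
  by (rule ext) (simp add: Dp_def c3_fromc is_poly3_pderiv3)

lemma c3_fromc_eq: assumes "is_poly3 P" shows "c3 (fromc P) = P"
  using assms by (simp add: c3_fromc fun_eq_iff)

lemma rep_pderiv: assumes "is_poly3 P" shows "pderiv3 i P = c3 (Dp i (fromc P))"
  using assms by (simp add: c3_Dp c3_fromc_eq)

lemma fromc_inj: assumes "is_poly3 P" "is_poly3 Q" "fromc P = fromc Q" shows "P = Q"
  by (metis assms c3_fromc ext)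

definition ev :: "P3 \<Rightarrow> complex \<Rightarrow> complex \<Rightarrow> complex \<Rightarrow> complex" where
  "ev Q z0 z1 z2 = poly (poly (poly Q [:[:z0:]:]) [:z1:]) z2"

lemma ev_add[simp]: "ev (Q + R) z0 z1 z2 = ev Q z0 z1 z2 + ev R z0 z1 z2"
  by (simp add: ev_def)
lemma ev_diff[simp]: "ev (Q - R) z0 z1 z2 = ev Q z0 z1 z2 - ev R z0 z1 z2"
  by (simp add: ev_def)
lemma ev_mult[simp]: "ev (Q * R) z0 z1 z2 = ev Q z0 z1 z2 * ev R z0 z1 z2"
  by (simp add: ev_def)
lemma ev_uminus[simp]: "ev (- Q) z0 z1 z2 = - ev Q z0 z1 z2"
  by (simp add: ev_def)
lemma ev_power[simp]: "ev (Q ^ n) z0 z1 z2 = ev Q z0 z1 z2 ^ n"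
  by (simp add: ev_def poly_power)
lemma ev_sum: "ev (\<Sum>x\<in>A. f x) z0 z1 z2 = (\<Sum>x\<in>A. ev (f x) z0 z1 z2)"
  by (simp add: ev_def poly_sum)
lemma ev_prod: "ev (\<Prod>x\<in>A. f x) z0 z1 z2 = (\<Prod>x\<in>A. ev (f x) z0 z1 z2)"
  by (simp add: ev_def poly_prod)
lemma ev_const3[simp]: "ev (const3 x) z0 z1 z2 = x"
  by (simp add: ev_def const3_def)
lemma ev_one[simp]: "ev 1 z0 z1 z2 = 1"
  by (simp add: ev_def)
lemma ev_mono3p[simp]: "ev (mono3p (a,b,c)) z0 z1 z2 = z0^a * z1^b * z2^c"
  by (simp add: ev_def mono3p_def poly_monom poly_power mult_ac)

lemma eval3_ev: assumes "is_poly3 P" shows "eval3 P z0 z1 z2 = ev (fromc P) z0 z1 z2"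
  unfolding eval3_def fromc_def ev_sum
  by (rule sum.cong) auto



definition crd :: "nat \<Rightarrow> mono3 \<Rightarrow> nat" where
  "crd i m = (case m of (a,b,c) \<Rightarrow> if i = 0 then a else if i = 1 then b else c)"

lemma fin_sub: assumes "\<And>m. P m \<noteq> 0 \<Longrightarrow> c3 Q m \<noteq> 0" shows "is_poly3 P"
  unfolding is_poly3_def by (rule finite_subset[OF _ fin_c3[of Q]]) (use assms in auto)

definition th :: "nat \<Rightarrow> P3 \<Rightarrow> P3" where
  "th i Q = fromc (\<lambda>m. of_nat (crd i m) * c3 Q m)"

lemma c3_th[simp]: "c3 (th i Q) m = of_nat (crd i m) * c3 Q m"
  unfolding th_def by (rule c3_fromc, rule fin_sub[of _ Q]) auto

lemma sum3_split:
  "(\<Sum>i\<le>a. \<Sum>j\<le>b. \<Sum>k\<le>c. f i j k + g i j k :: complex) =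
   (\<Sum>i\<le>a. \<Sum>j\<le>b. \<Sum>k\<le>c. f i j k) + (\<Sum>i\<le>a. \<Sum>j\<le>b. \<Sum>k\<le>c. g i j k)"
  by (simp add: sum.distrib)

lemma sum3_mult_left:
  "x * (\<Sum>i\<le>a. \<Sum>j\<le>b. \<Sum>k\<le>c. f i j k :: complex) = (\<Sum>i\<le>a. \<Sum>j\<le>b. \<Sum>k\<le>c. x * f i j k)"
  by (simp add: sum_distrib_left)

lemma sum3_cong:
  assumes "\<And>i j k. i \<le> a \<Longrightarrow> j \<le> b \<Longrightarrow> k \<le> c \<Longrightarrow> f i j k = g i j k"
  shows "(\<Sum>i\<le>a. \<Sum>j\<le>b. \<Sum>k\<le>c. f i j k :: complex) = (\<Sum>i\<le>a. \<Sum>j\<le>b. \<Sum>k\<le>c. g i j k)"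
  using assms by (intro sum.cong refl) auto

lemma th_mult: "th i (Q * R) = th i Q * R + Q * th i R"
proof (rule P3_eqI)
  fix a b c
  have "c3 (th i Q * R + Q * th i R) (a,b,c) =
     (\<Sum>i'\<le>a. \<Sum>j\<le>b. \<Sum>k\<le>c. of_nat (crd i (i',j,k)) * c3 Q (i',j,k) * c3 R (a-i',b-j,c-k)
        + c3 Q (i',j,k) * (of_nat (crd i (a-i',b-j,c-k)) * c3 R (a-i',b-j,c-k)))"
    by (simp add: c3_mult sum3_split)
  also have "\<dots> = (\<Sum>i'\<le>a. \<Sum>j\<le>b. \<Sum>k\<le>c. of_nat (crd i (a,b,c)) * (c3 Q (i',j,k) * c3 R (a-i',b-j,c-k)))"
    by (rule sum3_cong) (auto simp: crd_def algebra_simps of_nat_diff)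
  also have "\<dots> = c3 (th i (Q * R)) (a,b,c)"
    by (simp add: c3_mult sum3_mult_left)
  finally show "c3 (th i (Q * R)) (a,b,c) = c3 (th i Q * R + Q * th i R) (a,b,c)" by simp
qed

lemma th_add: "th i (Q + R) = th i Q + th i R"
  by (rule P3_eqI) (simp add: algebra_simps)
lemma th_diff: "th i (Q - R) = th i Q - th i R"
  by (rule P3_eqI) (simp add: algebra_simps)
lemma th_const3: "th i (const3 x) = 0"
  by (rule P3_eqI) (auto simp: c3_const3 crd_def)
lemma th_const3_mult: "th i (const3 x * Q) = const3 x * th i Q"
  by (simp add: th_mult th_const3)
lemma th_one: "th i 1 = 0"
  using th_const3[of i 1] by simp
lemma th_mono3p: "th i (mono3p m) = const3 (of_nat (crd i m)) * mono3p m"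
  by (rule P3_eqI) (auto simp: c3_mono3p)
lemma th_power: "th i (Q ^ Suc n) = const3 (of_nat (Suc n)) * Q ^ n * th i Q"
proof (induction n)
  case 0 then show ?case by simp
next
  case (Suc n)
  have "th i (Q ^ Suc (Suc n)) = th i Q * Q ^ Suc n + Q * th i (Q ^ Suc n)"
    unfolding power_Suc[of Q "Suc n"] by (rule th_mult)
  also have "\<dots> = const3 (of_nat (Suc (Suc n))) * Q ^ Suc n * th i Q"
    using Suc.IH unfolding const3_of_nat unfolding of_nat_Suc power_Suc by (simp add: algebra_simps)
  finally show ?case .
qed

lemma x0_Dp: "mono3p (1,0,0) * Dp 0 Q = th 0 Q"
  by (rule P3_eqI) (auto simp: c3_mono3p_mult c3_Dp pderiv3_def crd_def)
lemma x1_Dp: "mono3p (0,1,0) * Dp 1 Q = th 1 Q"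
  by (rule P3_eqI) (auto simp: c3_mono3p_mult c3_Dp pderiv3_def crd_def)
lemma x2_Dp: "mono3p (0,0,1) * Dp 2 Q = th 2 Q"
  by (rule P3_eqI) (auto simp: c3_mono3p_mult c3_Dp pderiv3_def crd_def)

definition epow :: "complex \<times> complex \<times> complex \<Rightarrow> mono3 \<Rightarrow> complex" where
  "epow e m = (case e of (e0,e1,e2) \<Rightarrow> case m of (a,b,c) \<Rightarrow> e0^a * e1^b * e2^c)"

definition sig :: "complex \<times> complex \<times> complex \<Rightarrow> P3 \<Rightarrow> P3" where
  "sig e Q = fromc (\<lambda>m. epow e m * c3 Q m)"

lemma c3_sig[simp]: "c3 (sig e Q) m = epow e m * c3 Q m"
  unfolding sig_def by (rule c3_fromc, rule fin_sub[of _ Q]) auto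

lemma sig_mult: "sig e (Q * R) = sig e Q * sig e R"
proof (rule P3_eqI)
  fix a b c
  obtain e0 e1 e2 where e: "e = (e0,e1,e2)" by (cases e)
  have "c3 (sig e Q * sig e R) (a,b,c) =
     (\<Sum>i\<le>a. \<Sum>j\<le>b. \<Sum>k\<le>c. epow e (a,b,c) * (c3 Q (i,j,k) * c3 R (a-i,b-j,c-k)))"
    unfolding c3_mult c3_sig
  proof (rule sum3_cong)
    fix i j k assume "i \<le> a" "j \<le> b" "k \<le> c"
    hence "e0^i * e0^(a-i) = e0^a" "e1^j * e1^(b-j) = e1^b" "e2^k * e2^(c-k) = e2^c"
      by (simp_all flip: power_add)
    moreover have "epow e (i,j,k) * epow e (a-i,b-j,c-k) =
       (e0^i * e0^(a-i)) * (e1^j * e1^(b-j)) * (e2^k * e2^(c-k))"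
      by (simp add: e epow_def ac_simps)
    ultimately have ee: "epow e (i,j,k) * epow e (a-i,b-j,c-k) = epow e (a,b,c)"
      by (simp add: e epow_def)
    have "epow e (i,j,k) * c3 Q (i,j,k) * (epow e (a-i,b-j,c-k) * c3 R (a-i,b-j,c-k)) =
          (epow e (i,j,k) * epow e (a-i,b-j,c-k)) * (c3 Q (i,j,k) * c3 R (a-i,b-j,c-k))"
      by (simp add: ac_simps)
    thus "epow e (i,j,k) * c3 Q (i,j,k) * (epow e (a-i,b-j,c-k) * c3 R (a-i,b-j,c-k)) =
          epow e (a,b,c) * (c3 Q (i,j,k) * c3 R (a-i,b-j,c-k))"
      by (simp only: ee)
  qed
  also have "\<dots> = c3 (sig e (Q * R)) (a,b,c)"
    by (simp add: c3_mult sum3_mult_left)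
  finally show "c3 (sig e (Q * R)) (a,b,c) = c3 (sig e Q * sig e R) (a,b,c)" by simp
qed

lemma sig_add: "sig e (Q + R) = sig e Q + sig e R"
  by (rule P3_eqI) (simp add: algebra_simps)
lemma sig_diff: "sig e (Q - R) = sig e Q - sig e R"
  by (rule P3_eqI) (simp add: algebra_simps)
lemma sig_const3: "sig e (const3 x) = const3 x"
  by (rule P3_eqI) (auto simp: c3_const3 epow_def split: prod.splits)
lemma sig_one: "sig e 1 = 1"
  using sig_const3[of e 1] by simp
lemma sig_mono3p: "sig e (mono3p m) = const3 (epow e m) * mono3p m"
  by (rule P3_eqI) (auto simp: c3_mono3p)
lemma sig_th: "sig e (th i Q) = th i (sig e Q)"
  by (rule P3_eqI) (simp add: algebra_simps)
lemma sig_sum: "sig e (\<Sum>x\<in>A. f x) = (\<Sum>x\<in>A. sig e (f x))"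
proof (rule P3_eqI)
  fix a b c show "c3 (sig e (\<Sum>x\<in>A. f x)) (a,b,c) = c3 (\<Sum>x\<in>A. sig e (f x)) (a,b,c)"
    by (simp add: c3_sum sum_distrib_left)
qed
lemma sig_prod: "sig e (\<Prod>x\<in>A. f x) = (\<Prod>x\<in>A. sig e (f x))"
proof (induction A rule: infinite_finite_induct)
  case (infinite A) then show ?case by (simp add: sig_one)
next
  case empty then show ?case by (simp add: sig_one)
next
  case (insert x F) then show ?case by (simp add: sig_mult)
qed

definition emul :: "complex \<times> complex \<times> complex \<Rightarrow> complex \<times> complex \<times> complex \<Rightarrow> complex \<times> complex \<times> complex" where
  "emul e e' = (case e of (a,b,c) \<Rightarrow> case e' of (a',b',c') \<Rightarrow> (a*a', b*b', c*c'))"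

lemma sig_sig: "sig e (sig e' Q) = sig (emul e e') Q"
  by (rule P3_eqI) (auto simp: epow_def emul_def power_mult_distrib split: prod.splits)

lemma sig_111: "sig (1,1,1) Q = Q"
  by (rule P3_eqI) (simp add: epow_def)

definition wdeg :: "nat \<Rightarrow> nat \<Rightarrow> nat \<Rightarrow> mono3 \<Rightarrow> nat" where
  "wdeg l0 l1 l2 m = (case m of (a,b,c) \<Rightarrow> l0*a + l1*b + l2*c)"

definition hom :: "nat \<Rightarrow> nat \<Rightarrow> nat \<Rightarrow> P3 \<Rightarrow> nat \<Rightarrow> bool" where
  "hom l0 l1 l2 Q D \<longleftrightarrow> (\<forall>m. c3 Q m \<noteq> 0 \<longrightarrow> wdeg l0 l1 l2 m = D)"

lemma wdeg_split: assumes "i \<le> a" "j \<le> b" "k \<le> c"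
  shows "wdeg l0 l1 l2 (a,b,c) = wdeg l0 l1 l2 (i,j,k) + wdeg l0 l1 l2 (a-i,b-j,c-k)"
proof -
  obtain a' b' c' where "a = i + a'" "b = j + b'" "c = k + c'"
    using assms by (metis le_add_diff_inverse)
  thus ?thesis by (simp add: wdeg_def algebra_simps)
qed

lemma sum_nz_obtain: assumes "sum g A \<noteq> (0::complex)" obtains x where "x \<in> A" "g x \<noteq> 0"
  using assms sum.not_neutral_contains_not_neutral by blast

lemma hom_mult: assumes "hom l0 l1 l2 Q D" "hom l0 l1 l2 R E"
  shows "hom l0 l1 l2 (Q * R) (D + E)"
  unfolding hom_def
proof (intro allI impI)
  fix m assume nz: "c3 (Q * R) m \<noteq> 0"
  obtain a b c where m: "m = (a,b,c)" by (cases m)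
  from nz have s1: "(\<Sum>i\<le>a. \<Sum>j\<le>b. \<Sum>k\<le>c. c3 Q (i,j,k) * c3 R (a-i,b-j,c-k)) \<noteq> 0"
    by (simp add: m c3_mult)
  obtain i where i0: "i \<in> {..a}" and s2: "(\<Sum>j\<le>b. \<Sum>k\<le>c. c3 Q (i,j,k) * c3 R (a-i,b-j,c-k)) \<noteq> 0"
    using sum_nz_obtain[OF s1] by blast
  obtain j where j0: "j \<in> {..b}" and s3: "(\<Sum>k\<le>c. c3 Q (i,j,k) * c3 R (a-i,b-j,c-k)) \<noteq> 0"
    using sum_nz_obtain[OF s2] by blast
  obtain k where k0: "k \<in> {..c}" and nzt: "c3 Q (i,j,k) * c3 R (a-i,b-j,c-k) \<noteq> 0"
    using sum_nz_obtain[OF s3] by blast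
  have i: "i \<le> a" and j: "j \<le> b" and k: "k \<le> c" using i0 j0 k0 by auto
  from nzt have "c3 Q (i,j,k) \<noteq> 0" "c3 R (a-i,b-j,c-k) \<noteq> 0" by auto
  hence "wdeg l0 l1 l2 (i,j,k) = D" "wdeg l0 l1 l2 (a-i,b-j,c-k) = E"
    using assms by (auto simp: hom_def)
  thus "wdeg l0 l1 l2 m = D + E"
    using i j k wdeg_split[OF i j k, of l0 l1 l2] by (simp add: m)
qed

lemma hom_add: "hom l0 l1 l2 Q D \<Longrightarrow> hom l0 l1 l2 R D \<Longrightarrow> hom l0 l1 l2 (Q + R) D"
  unfolding hom_def by (metis add.right_neutral add_0 c3_add)
lemma hom_diff: "hom l0 l1 l2 Q D \<Longrightarrow> hom l0 l1 l2 R D \<Longrightarrow> hom l0 l1 l2 (Q - R) D"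
  unfolding hom_def by (metis diff_zero diff_self c3_diff)
lemma hom_zero: "hom l0 l1 l2 0 D"
  by (auto simp: hom_def)
lemma hom_const3_mult: "hom l0 l1 l2 Q D \<Longrightarrow> hom l0 l1 l2 (const3 x * Q) D"
  by (auto simp: hom_def)
lemma hom_th: "hom l0 l1 l2 Q D \<Longrightarrow> hom l0 l1 l2 (th i Q) D"
  by (auto simp: hom_def)
lemma hom_sig: "hom l0 l1 l2 Q D \<Longrightarrow> hom l0 l1 l2 (sig e Q) D"
  by (auto simp: hom_def)
lemma hom_mono3p: "hom l0 l1 l2 (mono3p m) (wdeg l0 l1 l2 m)"
  by (auto simp: hom_def c3_mono3p)
lemma hom_one: "hom l0 l1 l2 1 0"
  using hom_mono3p[of l0 l1 l2 "(0,0,0)"] by (simp add: mono3p_0 wdeg_def)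
lemma hom_sum: "(\<And>x. x \<in> A \<Longrightarrow> hom l0 l1 l2 (f x) D) \<Longrightarrow> hom l0 l1 l2 (\<Sum>x\<in>A. f x) D"
proof (induction A rule: infinite_finite_induct)
  case (infinite A) then show ?case by (simp add: hom_zero)
next
  case empty then show ?case by (simp add: hom_zero)
next
  case (insert x F) then show ?case by (simp add: hom_add)
qed
lemma hom_prod: "(\<And>x. x \<in> A \<Longrightarrow> hom l0 l1 l2 (f x) D) \<Longrightarrow> hom l0 l1 l2 (\<Prod>x\<in>A. f x) (card A * D)"
proof (induction A rule: infinite_finite_induct)
  case (infinite A) then show ?case by (simp add: hom_one)
next
  case empty then show ?case by (simp add: hom_one)
next
  case (insert x F) then show ?case using hom_mult[of l0 l1 l2 "f x" D] by simp
qed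
lemma hom_power: "hom l0 l1 l2 Q D \<Longrightarrow> hom l0 l1 l2 (Q ^ n) (n * D)"
  by (induction n) (simp_all add: hom_one hom_mult)

definition hpart :: "nat \<Rightarrow> nat \<Rightarrow> nat \<Rightarrow> nat \<Rightarrow> P3 \<Rightarrow> P3" where
  "hpart l0 l1 l2 D Q = fromc (\<lambda>m. if wdeg l0 l1 l2 m = D then c3 Q m else 0)"

lemma c3_hpart: "c3 (hpart l0 l1 l2 D Q) m = (if wdeg l0 l1 l2 m = D then c3 Q m else 0)"
  unfolding hpart_def by (rule c3_fromc, rule fin_sub[of _ Q]) (auto split: if_split_asm)

lemma hpart_hom: assumes "hom l0 l1 l2 Q D" shows "hpart l0 l1 l2 D Q = Q"
proof (rule P3_eqI)
  fix a b c show "c3 (hpart l0 l1 l2 D Q) (a,b,c) = c3 Q (a,b,c)"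
    by (cases "wdeg l0 l1 l2 (a,b,c) = D") (use assms in \<open>auto simp: c3_hpart hom_def\<close>)
qed

lemma hom_hpart: "hom l0 l1 l2 (hpart l0 l1 l2 D Q) D"
  by (auto simp: hom_def c3_hpart split: if_split_asm)

lemma hpart_mult: assumes "hom l0 l1 l2 R d"
  shows "hpart l0 l1 l2 (D + d) (Q * R) = hpart l0 l1 l2 D Q * R"
proof (rule P3_eqI)
  fix a b c
  show "c3 (hpart l0 l1 l2 (D + d) (Q * R)) (a,b,c) = c3 (hpart l0 l1 l2 D Q * R) (a,b,c)"
  proof (cases "wdeg l0 l1 l2 (a,b,c) = D + d")
    case True
    show ?thesis unfolding c3_hpart c3_mult using True
    proof (simp, intro sum3_cong)
      fix i j k assume ijk: "i \<le> a" "j \<le> b" "k \<le> c"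
      show "c3 Q (i,j,k) * c3 R (a-i,b-j,c-k) =
        (if wdeg l0 l1 l2 (i,j,k) = D then c3 Q (i,j,k) else 0) * c3 R (a-i,b-j,c-k)"
      proof (cases "c3 R (a-i,b-j,c-k) = 0")
        case False
        hence "wdeg l0 l1 l2 (a-i,b-j,c-k) = d" using assms by (auto simp: hom_def)
        hence "wdeg l0 l1 l2 (i,j,k) = D" using True wdeg_split[OF ijk, of l0 l1 l2]
          by simp
        thus ?thesis by simp
      qed simp
    qed
  next
    case False
    have "(\<Sum>i\<le>a. \<Sum>j\<le>b. \<Sum>k\<le>c.
        (if wdeg l0 l1 l2 (i,j,k) = D then c3 Q (i,j,k) else 0) * c3 R (a-i,b-j,c-k)) =
        (\<Sum>i\<le>a. \<Sum>j\<le>b. \<Sum>k\<le>c. 0)"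
    proof (rule sum3_cong)
      fix i j k assume ijk: "i \<le> a" "j \<le> b" "k \<le> c"
      show "(if wdeg l0 l1 l2 (i,j,k) = D then c3 Q (i,j,k) else 0) * c3 R (a-i,b-j,c-k) = 0"
      proof (cases "c3 R (a-i,b-j,c-k) = 0")
        case nz: False
        hence "wdeg l0 l1 l2 (a-i,b-j,c-k) = d" using assms by (auto simp: hom_def)
        hence "wdeg l0 l1 l2 (i,j,k) \<noteq> D" using False wdeg_split[OF ijk, of l0 l1 l2]
          by simp
        thus ?thesis by simp
      qed simp
    qed
    moreover have "c3 (hpart l0 l1 l2 (D + d) (Q * R)) (a,b,c) = 0" using False by (simp add: c3_hpart)
    moreover have "c3 (hpart l0 l1 l2 D Q * R) (a,b,c) = (\<Sum>i\<le>a. \<Sum>j\<le>b. \<Sum>k\<le>c.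
        (if wdeg l0 l1 l2 (i,j,k) = D then c3 Q (i,j,k) else 0) * c3 R (a-i,b-j,c-k))"
      by (simp add: c3_mult c3_hpart)
    ultimately show ?thesis by simp
  qed
qed



lemma is_poly3_add3: "is_poly3 P \<Longrightarrow> is_poly3 Q \<Longrightarrow> is_poly3 (add3 P Q)"
  by (simp add: rep_add)
lemma is_poly3_mult3: "is_poly3 P \<Longrightarrow> is_poly3 Q \<Longrightarrow> is_poly3 (mult3 P Q)"
  by (simp add: rep_mult)
lemma is_poly3_smult3: "is_poly3 P \<Longrightarrow> is_poly3 (smult3 x P)"
  by (simp add: rep_smult)
lemma is_poly3_monom3: "is_poly3 (monom3 m)"
  by (simp add: rep_monom)
lemma fromc_add3: "is_poly3 P \<Longrightarrow> is_poly3 Q \<Longrightarrow> fromc (add3 P Q) = fromc P + fromc Q"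
  by (simp add: rep_add)
lemma fromc_mult3: "is_poly3 P \<Longrightarrow> is_poly3 Q \<Longrightarrow> fromc (mult3 P Q) = fromc P * fromc Q"
  by (simp add: rep_mult)
lemma fromc_smult3: "is_poly3 P \<Longrightarrow> fromc (smult3 x P) = const3 x * fromc P"
  by (simp add: rep_smult)
lemma fromc_monom3: "fromc (monom3 m) = mono3p m"
  by (simp add: rep_monom)
lemma fromc_pderiv3: "is_poly3 P \<Longrightarrow> fromc (pderiv3 i P) = Dp i (fromc P)"
  by (simp add: rep_pderiv)

lemma is_poly3_Gpoly: "is_poly3 (Gpoly l0 l1 l2)"
  by (simp add: Gpoly_def is_poly3_add3 is_poly3_monom3)

lemma is_poly3_beta: "is_poly3 (beta_fol l0 l1 l2 lam mu gam i)"
  by (simp add: beta_fol_def Let_def is_poly3_add3 is_poly3_mult3 is_poly3_smult3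
      is_poly3_monom3 is_poly3_Gpoly is_poly3_pderiv3)

locale fol =
  fixes l0 l1 l2 :: nat and lam mu gam :: complex
  assumes l0pos: "1 \<le> l0" and l1pos: "1 \<le> l1" and l2pos: "1 \<le> l2"
    and indep: "\<forall>a b c :: int. of_int a * lam + of_int b * mu + of_int c * gam = 0
            \<longrightarrow> a = 0 \<and> b = 0 \<and> c = 0"
begin

definition "w0 = l1 * l2"
definition "w1 = l0 * l2"
definition "w2 = l0 * l1"
definition "NN = l0 * l1 * l2"

lemma w_pos: "w0 \<ge> 1" "w1 \<ge> 1" "w2 \<ge> 1" "NN \<ge> 1"
  using l0pos l1pos l2pos by (simp_all add: w0_def w1_def w2_def NN_def)

lemma lw: "l0 * w0 = NN" "l1 * w1 = NN" "l2 * w2 = NN"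
  by (simp_all add: w0_def w1_def w2_def NN_def)

definition "X0 = mono3p (w0,0,0)"
definition "X1 = mono3p (0,w1,0)"
definition "X2 = mono3p (0,0,w2)"
definition "Gn = X0 + X1 + X2"
definition "PP0 = const3 lam * X1 + const3 lam * X2 - const3 (mu+gam) * X0"
definition "PP1 = const3 mu * X0 + const3 mu * X2 - const3 (lam+gam) * X1"
definition "PP2 = const3 gam * X0 + const3 gam * X1 - const3 (lam+mu) * X2"
definition "TT Q = const3 (of_nat w0) * PP0 * th 1 Q - const3 (of_nat w1) * PP1 * th 0 Q"

lemma fromc_G: "fromc (Gpoly l0 l1 l2) = Gn"
  by (simp add: Gpoly_def fromc_add3 is_poly3_add3 is_poly3_monom3 fromc_monom3 Gn_def X0_def X1_def
      X2_def w0_def w1_def w2_def add.assoc)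

lemma c3_Gn: "c3 Gn m = (if m = (w0,0,0) then 1 else 0) + (if m = (0,w1,0) then 1 else 0)
   + (if m = (0,0,w2) then 1 else 0)"
  by (simp add: Gn_def X0_def X1_def X2_def c3_mono3p)

lemma Dp0_G: "Dp 0 Gn = const3 (of_nat w0) * mono3p (w0 - 1, 0, 0)"
proof (rule P3_eqI)
  fix a b c show "c3 (Dp 0 Gn) (a,b,c) = c3 (const3 (of_nat w0) * mono3p (w0 - 1, 0, 0)) (a,b,c)"
    using w_pos by (auto simp: c3_Dp pderiv3_def c3_Gn c3_mono3p)
qed
lemma Dp1_G: "Dp 1 Gn = const3 (of_nat w1) * mono3p (0, w1 - 1, 0)"
proof (rule P3_eqI)
  fix a b c show "c3 (Dp 1 Gn) (a,b,c) = c3 (const3 (of_nat w1) * mono3p (0, w1 - 1, 0)) (a,b,c)"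
    using w_pos by (auto simp: c3_Dp pderiv3_def c3_Gn c3_mono3p)
qed
lemma Dp2_G: "Dp 2 Gn = const3 (of_nat w2) * mono3p (0, 0, w2 - 1)"
proof (rule P3_eqI)
  fix a b c show "c3 (Dp 2 Gn) (a,b,c) = c3 (const3 (of_nat w2) * mono3p (0, 0, w2 - 1)) (a,b,c)"
    using w_pos by (auto simp: c3_Dp pderiv3_def c3_Gn c3_mono3p)
qed

abbreviation "An i \<equiv> fromc (beta_fol l0 l1 l2 lam mu gam i)"

lemma An0: "An 0 = const3 (of_nat w0) * mono3p (0,1,1) * PP0"
proof -
  have m: "mono3p (1,1,1) * mono3p (w0 - 1, 0, 0) = mono3p (0,1,1) * X0"
    using w_pos by (simp add: mono3p_mult X0_def)
  have "An 0 = const3 (lam * of_nat w0) * (mono3p (0,1,1) * Gn)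
          + const3 (-(lam+mu+gam)) * (mono3p (1,1,1) * Dp 0 Gn)"
    by (simp add: beta_fol_def Let_def fromc_add3 fromc_mult3 fromc_smult3 fromc_monom3
      fromc_pderiv3 is_poly3_add3 is_poly3_mult3 is_poly3_smult3 is_poly3_monom3 is_poly3_Gpoly
      is_poly3_pderiv3 fromc_G w0_def)
  also have "\<dots> = const3 (of_nat w0) * mono3p (0,1,1) * PP0"
  proof -
    have m2: "mono3p (1,1,1) * (const3 (of_nat w0) * mono3p (w0 - 1, 0, 0)) = const3 (of_nat w0) * (mono3p (0,1,1) * X0)"
      by (metis m mult.left_commute)
    show ?thesis unfolding Dp0_G m2 unfolding PP0_def Gn_def const3_mult const3_uminus const3_add
      by (simp add: algebra_simps)
  qed
  finally show ?thesis .
qed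

lemma An1: "An 1 = const3 (of_nat w1) * mono3p (1,0,1) * PP1"
proof -
  have m: "mono3p (1,1,1) * mono3p (0, w1 - 1, 0) = mono3p (1,0,1) * X1"
    using w_pos by (simp add: mono3p_mult X1_def)
  have "An 1 = const3 (mu * of_nat w1) * (mono3p (1,0,1) * Gn)
          + const3 (-(lam+mu+gam)) * (mono3p (1,1,1) * Dp 1 Gn)"
    by (simp add: beta_fol_def Let_def fromc_add3 fromc_mult3 fromc_smult3 fromc_monom3
      fromc_pderiv3 is_poly3_add3 is_poly3_mult3 is_poly3_smult3 is_poly3_monom3 is_poly3_Gpoly
      is_poly3_pderiv3 fromc_G w1_def)
  also have "\<dots> = const3 (of_nat w1) * mono3p (1,0,1) * PP1"
  proof -
    have m2: "mono3p (1,1,1) * (const3 (of_nat w1) * mono3p (0, w1 - 1, 0)) = const3 (of_nat w1) * (mono3p (1,0,1) * X1)"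
      by (metis m mult.left_commute)
    show ?thesis unfolding Dp1_G m2 unfolding PP1_def Gn_def const3_mult const3_uminus const3_add
      by (simp add: algebra_simps)
  qed
  finally show ?thesis .
qed

lemma An2: "An 2 = const3 (of_nat w2) * mono3p (1,1,0) * PP2"
proof -
  have m: "mono3p (1,1,1) * mono3p (0, 0, w2 - 1) = mono3p (1,1,0) * X2"
    using w_pos by (simp add: mono3p_mult X2_def)
  have "An 2 = const3 (gam * of_nat w2) * (mono3p (1,1,0) * Gn)
          + const3 (-(lam+mu+gam)) * (mono3p (1,1,1) * Dp 2 Gn)"
    by (simp add: beta_fol_def Let_def fromc_add3 fromc_mult3 fromc_smult3 fromc_monom3
      fromc_pderiv3 is_poly3_add3 is_poly3_mult3 is_poly3_smult3 is_poly3_monom3 is_poly3_Gpoly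
      is_poly3_pderiv3 fromc_G w2_def)
  also have "\<dots> = const3 (of_nat w2) * mono3p (1,1,0) * PP2"
  proof -
    have m2: "mono3p (1,1,1) * (const3 (of_nat w2) * mono3p (0, 0, w2 - 1)) = const3 (of_nat w2) * (mono3p (1,1,0) * X2)"
      by (metis m mult.left_commute)
    show ?thesis unfolding Dp2_G m2 unfolding PP2_def Gn_def const3_mult const3_uminus const3_add
      by (simp add: algebra_simps)
  qed
  finally show ?thesis .
qed

end


lemma mono3p_nz: "mono3p m \<noteq> 0"
proof
  assume "mono3p m = 0"
  hence "c3 (mono3p m) m = 0" by simp
  thus False by (simp add: c3_mono3p)
qed

context fol begin

lemma PP_sum: "PP0 + PP1 + PP2 = 0"
  unfolding PP0_def PP1_def PP2_def const3_add by (simp add: algebra_simps)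

lemma LW: "const3 (of_nat l0) * const3 (of_nat w0) = const3 (of_nat NN)"
   "const3 (of_nat l1) * const3 (of_nat w1) = const3 (of_nat NN)"
   "const3 (of_nat l2) * const3 (of_nat w2) = const3 (of_nat NN)"
  by (simp_all add: const3_of_nat lw flip: of_nat_mult)

lemma inv_T:
  assumes inv: "invariant_curve l0 l1 l2 (beta_fol l0 l1 l2 lam mu gam) F"
  shows "\<exists>K d. TT (fromc F) = K * fromc F \<and> fromc F \<noteq> 0 \<and> hom l0 l1 l2 (fromc F) d
     \<and> is_poly3 F"
proof -
  from inv obtain d where qh: "quasi_hom3 l0 l1 l2 d F" and nc: "nonconstant3 F"
    by (auto simp: invariant_curve_def)
  have pF: "is_poly3 F" using qh by (simp add: quasi_hom3_def)
  define Fn where "Fn = fromc F"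
  have c3F: "c3 Fn = F" using pF by (simp add: Fn_def c3_fromc_eq)
  have Fnz: "Fn \<noteq> 0"
  proof
    assume "Fn = 0"
    hence "F = (\<lambda>m. 0)" using c3F by (auto simp: fun_eq_iff)
    thus False using nc by (simp add: nonconstant3_def)
  qed
  have homF: "hom l0 l1 l2 Fn d"
    using qh c3F by (auto simp: hom_def quasi_hom3_def wdeg_def)
  have allp: "\<forall>i j. i < j \<and> j \<le> 2 \<longrightarrow>
        (\<exists>\<Theta>. is_poly3 \<Theta> \<and>
           add3 (mult3 (beta_fol l0 l1 l2 lam mu gam i) (pderiv3 j F))
             (smult3 (-1) (mult3 (beta_fol l0 l1 l2 lam mu gam j) (pderiv3 i F))) = mult3 F \<Theta>)"
    using inv unfolding invariant_curve_def by blast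
  obtain Th1 where pT1: "is_poly3 Th1" and E1:
    "add3 (mult3 (beta_fol l0 l1 l2 lam mu gam 0) (pderiv3 1 F))
       (smult3 (-1) (mult3 (beta_fol l0 l1 l2 lam mu gam 1) (pderiv3 0 F))) = mult3 F Th1"
    using allp[rule_format, of 0 1] by auto
  obtain Th2 where pT2: "is_poly3 Th2" and E2:
    "add3 (mult3 (beta_fol l0 l1 l2 lam mu gam 0) (pderiv3 2 F))
       (smult3 (-1) (mult3 (beta_fol l0 l1 l2 lam mu gam 2) (pderiv3 0 F))) = mult3 F Th2"
    using allp[rule_format, of 0 2] by auto
  define T1 where "T1 = fromc Th1"
  define T2 where "T2 = fromc Th2"
  have E1': "An 0 * Dp 1 Fn - An 1 * Dp 0 Fn = Fn * T1"
  proof -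
    have "fromc (add3 (mult3 (beta_fol l0 l1 l2 lam mu gam 0) (pderiv3 1 F))
       (smult3 (-1) (mult3 (beta_fol l0 l1 l2 lam mu gam 1) (pderiv3 0 F)))) = fromc (mult3 F Th1)"
      using E1 by simp
    thus ?thesis
      by (simp add: Fn_def T1_def fromc_add3 fromc_mult3 fromc_smult3 fromc_pderiv3 is_poly3_add3
          is_poly3_mult3 is_poly3_smult3 is_poly3_pderiv3 is_poly3_beta pF pT1 const3_uminus)
  qed
  have E2': "An 0 * Dp 2 Fn - An 2 * Dp 0 Fn = Fn * T2"
  proof -
    have "fromc (add3 (mult3 (beta_fol l0 l1 l2 lam mu gam 0) (pderiv3 2 F))
       (smult3 (-1) (mult3 (beta_fol l0 l1 l2 lam mu gam 2) (pderiv3 0 F)))) = fromc (mult3 F Th2)"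
      using E2 by simp
    thus ?thesis
      by (simp add: Fn_def T2_def fromc_add3 fromc_mult3 fromc_smult3 fromc_pderiv3 is_poly3_add3
          is_poly3_mult3 is_poly3_smult3 is_poly3_pderiv3 is_poly3_beta pF pT2 const3_uminus)
  qed
  define x1 where "x1 = mono3p (0,1,0)"
  define x2 where "x2 = mono3p (0,0,1)"
  define W0 where "W0 = const3 (of_nat w0)"
  define W1 where "W1 = const3 (of_nat w1)"
  define W2 where "W2 = const3 (of_nat w2)"
  define L0 where "L0 = const3 (of_nat l0)"
  define L1 where "L1 = const3 (of_nat l1)"
  define L2 where "L2 = const3 (of_nat l2)"
  define Dd where "Dd = const3 (of_nat d)"
  define NC where "NC = const3 (of_nat NN)"
  define a where "a = th 0 Fn"
  define b where "b = th 1 Fn"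
  define c where "c = th 2 Fn"
  have m011: "mono3p (0,1,1) = x2 * x1" by (simp add: x1_def x2_def mono3p_mult)
  have m101: "mono3p (1,0,1) = x2 * mono3p (1,0,0)" by (simp add: x2_def mono3p_mult)
  have m011': "mono3p (0,1,1) = x1 * mono3p (0,0,1)" by (simp add: x1_def mono3p_mult)
  have m110: "mono3p (1,1,0) = x1 * mono3p (1,0,0)" by (simp add: x1_def mono3p_mult)
  have H1: "x2 * (W0 * PP0 * b - W1 * PP1 * a) = Fn * T1"
  proof -
    have "An 0 * Dp 1 Fn = x2 * (W0 * PP0 * b)"
      unfolding An0 m011 b_def x1_def W0_def x1_Dp[symmetric] by (simp add: ac_simps)
    moreover have "An 1 * Dp 0 Fn = x2 * (W1 * PP1 * a)"
      unfolding An1 m101 a_def W1_def x0_Dp[symmetric] by (simp add: ac_simps)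
    ultimately show ?thesis using E1' by (simp add: right_diff_distrib)
  qed
  have H2: "x1 * (W0 * PP0 * c - W2 * PP2 * a) = Fn * T2"
  proof -
    have "An 0 * Dp 2 Fn = x1 * (W0 * PP0 * c)"
      unfolding An0 m011' c_def W0_def x2_Dp[symmetric] by (simp add: ac_simps)
    moreover have "An 2 * Dp 0 Fn = x1 * (W2 * PP2 * a)"
      unfolding An2 m110 a_def W2_def x0_Dp[symmetric] by (simp add: ac_simps)
    ultimately show ?thesis using E2' by (simp add: right_diff_distrib)
  qed
  have Eul: "L0 * a + L1 * b + L2 * c = Dd * Fn"
  proof (rule P3_eqI)
    fix i j k
    show "c3 (L0 * a + L1 * b + L2 * c) (i,j,k) = c3 (Dd * Fn) (i,j,k)"
    proof (cases "F (i,j,k) = 0")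
      case True thus ?thesis by (simp add: L0_def L1_def L2_def Dd_def a_def b_def c_def c3F)
    next
      case False
      hence "l0*i + l1*j + l2*k = d" using qh by (auto simp: quasi_hom3_def)
      hence "of_nat l0 * of_nat i + of_nat l1 * of_nat j + of_nat l2 * of_nat k = (of_nat d :: complex)"
        by (metis of_nat_add of_nat_mult)
      moreover have "c3 (Dd * Fn) (i,j,k) = of_nat d * F (i,j,k)" by (simp add: Dd_def c3F)
      moreover have "c3 (L0 * a + L1 * b + L2 * c) (i,j,k) =
         (of_nat l0 * of_nat i + of_nat l1 * of_nat j + of_nat l2 * of_nat k) * F (i,j,k)"
        by (simp add: L0_def L1_def L2_def a_def b_def c_def c3F crd_def algebra_simps)
      ultimately show ?thesis by simp
    qed
  qed
  have LWs: "L0 * W0 = NC" "L1 * W1 = NC" "L2 * W2 = NC"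
    using LW by (simp_all add: L0_def L1_def L2_def W0_def W1_def W2_def NC_def)
  have key: "L1 * (W0 * PP0 * b - W1 * PP1 * a) =
     W0 * PP0 * (L0 * a + L1 * b + L2 * c) - L2 * (W0 * PP0 * c - W2 * PP2 * a)
     - a * (L0 * W0 * PP0 + L1 * W1 * PP1 + L2 * W2 * PP2)"
    by (simp add: algebra_simps)
  have z: "L0 * W0 * PP0 + L1 * W1 * PP1 + L2 * W2 * PP2 = 0"
    using PP_sum LWs by (simp add: distrib_left[symmetric])
  define B where "B = x1 * W0 * PP0 * Dd - L2 * T2"
  have H3: "x1 * (L1 * (W0 * PP0 * b - W1 * PP1 * a)) = Fn * B"
  proof -
    have "x1 * (L1 * (W0 * PP0 * b - W1 * PP1 * a)) =
          x1 * W0 * PP0 * (Dd * Fn) - L2 * (x1 * (W0 * PP0 * c - W2 * PP2 * a))"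
      unfolding key z Eul by (simp add: algebra_simps)
    also have "\<dots> = Fn * B" unfolding H2 B_def by (simp add: algebra_simps)
    finally show ?thesis .
  qed
  have "Fn * (x2 * B) = Fn * (x1 * L1 * T1)"
  proof -
    have "Fn * (x2 * B) = x2 * (x1 * (L1 * (W0 * PP0 * b - W1 * PP1 * a)))"
      unfolding H3 by (simp add: ac_simps)
    also have "\<dots> = x1 * L1 * (x2 * (W0 * PP0 * b - W1 * PP1 * a))" by (simp add: ac_simps)
    also have "\<dots> = Fn * (x1 * L1 * T1)" unfolding H1 by (simp add: ac_simps)
    finally show ?thesis .
  qed
  hence H4: "x2 * B = x1 * L1 * T1" using Fnz by simp
  have T1z: "c3 T1 (i,j,0) = 0" for i j
  proof -
    have "c3 (x2 * B) (i, j+1, 0) = 0" by (simp add: x2_def c3_mono3p_mult)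
    moreover have "c3 (x1 * L1 * T1) (i, j+1, 0) = of_nat l1 * c3 T1 (i,j,0)"
      by (simp add: x1_def L1_def c3_mono3p_mult mult.assoc mult.left_commute[of "mono3p _"])
    ultimately have "of_nat l1 * c3 T1 (i,j,0) = 0" using H4 by simp
    thus ?thesis using l1pos by simp
  qed
  define K where "K = fromc (\<lambda>m. case m of (i,j,k) \<Rightarrow> c3 T1 (i,j,k+1))"
  have c3K: "c3 K (i,j,k) = c3 T1 (i,j,k+1)" for i j k
  proof -
    have "is_poly3 (\<lambda>m. case m of (i,j,k) \<Rightarrow> c3 T1 (i,j,k+1))"
    proof -
      have "{m. (case m of (i,j,k) \<Rightarrow> c3 T1 (i,j,k+1)) \<noteq> 0} \<subseteq>
            (\<lambda>(i,j,k). (i,j,k-1)) ` {m. c3 T1 m \<noteq> 0}"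
      proof
        fix m assume "m \<in> {m. (case m of (i,j,k) \<Rightarrow> c3 T1 (i,j,k+1)) \<noteq> 0}"
        then obtain i j k where "m = (i,j,k)" "c3 T1 (i,j,k+1) \<noteq> 0" by (cases m) auto
        thus "m \<in> (\<lambda>(i,j,k). (i,j,k-1)) ` {m. c3 T1 m \<noteq> 0}"
          by (auto intro!: image_eqI[of _ _ "(i,j,k+1)"])
      qed
      thus ?thesis unfolding is_poly3_def using fin_c3 finite_subset by blast
    qed
    thus ?thesis by (simp add: K_def c3_fromc)
  qed
  have xK: "x2 * K = T1"
  proof (rule P3_eqI)
    fix i j k show "c3 (x2 * K) (i,j,k) = c3 T1 (i,j,k)"
      by (cases k) (simp_all add: x2_def c3_mono3p_mult c3K T1z)
  qed
  have "x2 * TT Fn = x2 * (K * Fn)"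
  proof -
    have "x2 * TT Fn = x2 * (W0 * PP0 * b - W1 * PP1 * a)"
      by (simp add: TT_def W0_def W1_def a_def b_def)
    also have "\<dots> = Fn * T1" by (rule H1)
    finally show ?thesis unfolding xK[symmetric] by (simp add: ac_simps)
  qed
  hence "TT Fn = K * Fn" using mono3p_nz by (simp add: x2_def)
  thus ?thesis using Fnz homF pF unfolding Fn_def by blast
qed

end


lemma root_unity_dvd:
  assumes n: "n > 0" and z: "cis (2 * pi / real n) ^ a = 1"
  shows "n dvd a"
proof -
  define z where "z = cis (2 * pi / real n)"
  have zk: "z ^ k = cis (2 * pi * real k / real n)" for k
    by (simp add: z_def DeMoivre mult_ac)
  have zn: "z ^ n = 1" using n by (simp add: zk)
  have a_eq: "n * (a div n) + a mod n = a" by (rule mult_div_mod_eq)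
  have "z ^ a = z ^ (n * (a div n) + a mod n)" by (simp only: a_eq)
  also have "\<dots> = z ^ (a mod n)" by (simp only: power_add power_mult zn power_one mult_1)
  finally have "z ^ (a mod n) = z ^ 0" using z by (simp add: z_def)
  moreover have "inj_on (\<lambda>k. cis (2 * pi * real k / real n)) {..<n}"
    using bij_betw_roots_unity[OF n] by (simp add: bij_betw_def)
  ultimately have "a mod n = 0" using n unfolding zk[symmetric]
    by (metis (no_types, lifting) inj_on_def lessThan_iff mod_less_divisor zero_less_iff_neq_zero)
  thus ?thesis by (simp add: dvd_eq_mod_eq_0)
qed

lemma sig_inv_dvd0:
  assumes n: "n > 0" and inv: "sig (cis (2 * pi / real n), 1, 1) Q = Q" and nz: "c3 Q (a,b,c) \<noteq> 0"
  shows "n dvd a"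
proof -
  have "c3 (sig (cis (2 * pi / real n), 1, 1) Q) (a,b,c) = c3 Q (a,b,c)" using inv by simp
  hence "cis (2 * pi / real n) ^ a * c3 Q (a,b,c) = c3 Q (a,b,c)" by (simp add: epow_def)
  hence "cis (2 * pi / real n) ^ a = 1" using nz by simp
  thus ?thesis by (rule root_unity_dvd[OF n])
qed
lemma sig_inv_dvd1:
  assumes n: "n > 0" and inv: "sig (1, cis (2 * pi / real n), 1) Q = Q" and nz: "c3 Q (a,b,c) \<noteq> 0"
  shows "n dvd b"
proof -
  have "c3 (sig (1, cis (2 * pi / real n), 1) Q) (a,b,c) = c3 Q (a,b,c)" using inv by simp
  hence "cis (2 * pi / real n) ^ b * c3 Q (a,b,c) = c3 Q (a,b,c)" by (simp add: epow_def)
  hence "cis (2 * pi / real n) ^ b = 1" using nz by simp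
  thus ?thesis by (rule root_unity_dvd[OF n])
qed
lemma sig_inv_dvd2:
  assumes n: "n > 0" and inv: "sig (1, 1, cis (2 * pi / real n)) Q = Q" and nz: "c3 Q (a,b,c) \<noteq> 0"
  shows "n dvd c"
proof -
  have "c3 (sig (1, 1, cis (2 * pi / real n)) Q) (a,b,c) = c3 Q (a,b,c)" using inv by simp
  hence "cis (2 * pi / real n) ^ c * c3 Q (a,b,c) = c3 Q (a,b,c)" by (simp add: epow_def)
  hence "cis (2 * pi / real n) ^ c = 1" using nz by simp
  thus ?thesis by (rule root_unity_dvd[OF n])
qed

lemma cis_root: "n > 0 \<Longrightarrow> cis (2 * pi / real n) ^ n = 1"
  by (simp add: DeMoivre)

context fol begin

definition RR :: "(complex \<times> complex \<times> complex) set" where "RR = {e. case e of (a,b,c) \<Rightarrow> a ^ w0 = 1 \<and> b ^ w1 = 1 \<and> c ^ w2 = (1::complex)}"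

lemma RR_eq: "RR = {z. z ^ w0 = 1} \<times> {z. z ^ w1 = 1} \<times> {z. z ^ w2 = 1}"
  by (auto simp: RR_def)

lemma finite_RR: "finite RR"
  unfolding RR_eq using w_pos by (intro finite_cartesian_product finite_nth_roots) auto

lemma one_RR: "(1,1,1) \<in> RR" by (simp add: RR_def)

lemma RR_nz: "(a,b,c) \<in> RR \<Longrightarrow> a \<noteq> 0 \<and> b \<noteq> 0 \<and> c \<noteq> 0"
  using w_pos by (auto simp: RR_def power_0_left)

lemma emul_bij: assumes "e' \<in> RR" shows "bij_betw (emul e') RR RR"
proof -
  obtain a b c where e': "e' = (a,b,c)" by (cases e')
  have nz: "a \<noteq> 0" "b \<noteq> 0" "c \<noteq> 0" using RR_nz assms e' by auto
  have sub: "emul e' ` RR \<subseteq> RR"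
    using assms by (auto simp: RR_def emul_def e' power_mult_distrib)
  have inj: "inj_on (emul e') RR"
    using nz by (auto simp: inj_on_def emul_def e')
  show ?thesis unfolding bij_betw_def using endo_inj_surj[OF finite_RR sub inj] inj by simp
qed

lemma gens_RR: "(cis (2 * pi / real w0), 1, 1) \<in> RR" "(1, cis (2 * pi / real w1), 1) \<in> RR"
   "(1, 1, cis (2 * pi / real w2)) \<in> RR"
  using w_pos by (auto simp: RR_def cis_root)

lemma sig_X: "e \<in> RR \<Longrightarrow> sig e X0 = X0" "e \<in> RR \<Longrightarrow> sig e X1 = X1" "e \<in> RR \<Longrightarrow> sig e X2 = X2"
  by (auto simp: X0_def X1_def X2_def sig_mono3p epow_def RR_def split: prod.splits)

lemma sig_PP: "e \<in> RR \<Longrightarrow> sig e PP0 = PP0" "e \<in> RR \<Longrightarrow> sig e PP1 = PP1"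
  by (simp_all add: PP0_def PP1_def sig_add sig_diff sig_mult sig_const3 sig_X)

lemma sig_TT: "e \<in> RR \<Longrightarrow> sig e (TT Q) = TT (sig e Q)"
  by (simp add: TT_def sig_diff sig_mult sig_const3 sig_PP sig_th)

lemma TT_mult: "TT (Q * R) = TT Q * R + Q * TT R"
  by (simp add: TT_def th_mult algebra_simps)

lemma TT_one: "TT 1 = 0" by (simp add: TT_def th_one)

lemma TT_add: "TT (Q + R) = TT Q + TT R" by (simp add: TT_def th_add algebra_simps)
lemma TT_diff: "TT (Q - R) = TT Q - TT R" by (simp add: TT_def th_diff algebra_simps)
lemma TT_const3_mult: "TT (const3 x * Q) = const3 x * TT Q"
proof -
  have "TT (const3 x) = 0" by (simp add: TT_def th_const3)
  thus ?thesis by (simp add: TT_mult)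
qed

lemma TT_prod: assumes "\<And>x. x \<in> A \<Longrightarrow> TT (f x) = g x * f x"
  shows "TT (\<Prod>x\<in>A. f x) = (\<Sum>x\<in>A. g x) * (\<Prod>x\<in>A. f x)"
  using assms
proof (induction A rule: infinite_finite_induct)
  case (infinite A) then show ?case by (simp add: TT_one)
next
  case empty then show ?case by (simp add: TT_one)
next
  case (insert x F)
  have "TT (\<Prod>x\<in>insert x F. f x) = TT (f x * (\<Prod>x\<in>F. f x))" using insert by simp
  also have "\<dots> = g x * f x * (\<Prod>x\<in>F. f x) + f x * ((\<Sum>x\<in>F. g x) * (\<Prod>x\<in>F. f x))"
    using insert by (simp add: TT_mult)
  also have "\<dots> = (\<Sum>x\<in>insert x F. g x) * (\<Prod>x\<in>insert x F. f x)"
    using insert by (simp add: algebra_simps)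
  finally show ?case .
qed

lemma hom_X: "hom l0 l1 l2 X0 NN" "hom l0 l1 l2 X1 NN" "hom l0 l1 l2 X2 NN"
  using hom_mono3p[of l0 l1 l2 "(w0,0,0)"] hom_mono3p[of l0 l1 l2 "(0,w1,0)"]
    hom_mono3p[of l0 l1 l2 "(0,0,w2)"] lw by (simp_all add: X0_def X1_def X2_def wdeg_def)

lemma hom_PP: "hom l0 l1 l2 PP0 NN" "hom l0 l1 l2 PP1 NN"
  by (simp_all add: PP0_def PP1_def hom_add hom_diff hom_const3_mult hom_X)

lemma hom_TT: "hom l0 l1 l2 Q D \<Longrightarrow> hom l0 l1 l2 (TT Q) (NN + D)"
  unfolding TT_def mult.assoc
  by (intro hom_diff hom_const3_mult hom_mult hom_PP hom_th)

lemma Kp_form: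
  assumes h: "hom l0 l1 l2 Kp NN"
    and d0: "\<And>a b c. c3 Kp (a,b,c) \<noteq> 0 \<Longrightarrow> w0 dvd a"
    and d1: "\<And>a b c. c3 Kp (a,b,c) \<noteq> 0 \<Longrightarrow> w1 dvd b"
    and d2: "\<And>a b c. c3 Kp (a,b,c) \<noteq> 0 \<Longrightarrow> w2 dvd c"
  shows "Kp = const3 (c3 Kp (w0,0,0)) * X0 + const3 (c3 Kp (0,w1,0)) * X1 + const3 (c3 Kp (0,0,w2)) * X2"
proof (rule P3_eqI)
  fix a b c
  have rhs: "c3 (const3 (c3 Kp (w0,0,0)) * X0 + const3 (c3 Kp (0,w1,0)) * X1 + const3 (c3 Kp (0,0,w2)) * X2) (a,b,c)
     = (if (a,b,c) = (w0,0,0) then c3 Kp (w0,0,0) else 0) + (if (a,b,c) = (0,w1,0) then c3 Kp (0,w1,0) else 0)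
       + (if (a,b,c) = (0,0,w2) then c3 Kp (0,0,w2) else 0)"
    by (simp add: X0_def X1_def X2_def c3_mono3p)
  show "c3 Kp (a,b,c) = c3 (const3 (c3 Kp (w0,0,0)) * X0 + const3 (c3 Kp (0,w1,0)) * X1 + const3 (c3 Kp (0,0,w2)) * X2) (a,b,c)"
  proof (cases "c3 Kp (a,b,c) = 0")
    case True
    thus ?thesis unfolding rhs by auto
  next
    case False
    obtain a' where a: "a = w0 * a'" using d0[OF False] by (auto elim: dvdE)
    obtain b' where b: "b = w1 * b'" using d1[OF False] by (auto elim: dvdE)
    obtain c' where c: "c = w2 * c'" using d2[OF False] by (auto elim: dvdE)
    have "l0 * a + l1 * b + l2 * c = NN" using h False by (auto simp: hom_def wdeg_def)
    hence "NN * (a' + b' + c') = NN * 1" using lw unfolding a b c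
      by (simp add: algebra_simps flip: mult.assoc)
    hence "a' + b' + c' = 1" using w_pos by simp
    hence "(a',b',c') = (1,0,0) \<or> (a',b',c') = (0,1,0) \<or> (a',b',c') = (0,0,1)" by auto
    thus ?thesis unfolding rhs using w_pos by (auto simp: a b c)
  qed
qed

lemma norm_result:
  assumes inv: "invariant_curve l0 l1 l2 (beta_fol l0 l1 l2 lam mu gam) F"
  shows "\<exists>Nm D k0 k1 k2. Nm \<noteq> 0 \<and> hom l0 l1 l2 Nm D \<and>
     (\<forall>a b c. c3 Nm (a,b,c) \<noteq> 0 \<longrightarrow> w0 dvd a \<and> w1 dvd b \<and> w2 dvd c) \<and>
     TT Nm = (const3 k0 * X0 + const3 k1 * X1 + const3 k2 * X2) * Nm \<and>
     (\<forall>z0 z1 z2. ev Nm z0 z1 z2 = (\<Prod>e\<in>RR. ev (sig e (fromc F)) z0 z1 z2)) \<and> is_poly3 F"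
proof -
  obtain K d where TK: "TT (fromc F) = K * fromc F" and Fnz: "fromc F \<noteq> 0"
    and hF: "hom l0 l1 l2 (fromc F) d" and pF: "is_poly3 F"
    using inv_T[OF inv] by blast
  define Fn where "Fn = fromc F"
  define Kh where "Kh = hpart l0 l1 l2 NN K"
  have TKh: "TT Fn = Kh * Fn"
  proof -
    have "TT Fn = hpart l0 l1 l2 (NN + d) (TT Fn)"
      using hom_TT[OF hF] by (simp add: hpart_hom Fn_def)
    also have "\<dots> = Kh * Fn" unfolding Kh_def Fn_def TK by (rule hpart_mult[OF hF])
    finally show ?thesis .
  qed
  define Nm where "Nm = (\<Prod>e\<in>RR. sig e Fn)"
  define Kp where "Kp = (\<Sum>e\<in>RR. sig e Kh)"
  have TN: "TT Nm = Kp * Nm"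
    unfolding Nm_def Kp_def
    by (rule TT_prod) (simp add: sig_TT[symmetric] TKh sig_mult)
  have sig_nz: "sig e Fn \<noteq> 0" if "e \<in> RR" for e
  proof
    assume z: "sig e Fn = 0"
    obtain m where m: "c3 Fn m \<noteq> 0" using Fnz Fn_def by (metis P3_eqI c3_zero)
    obtain e0 e1 e2 where e: "e = (e0,e1,e2)" by (cases e)
    obtain a b c where mm: "m = (a,b,c)" by (cases m)
    have "c3 (sig e Fn) m = epow e m * c3 Fn m" by simp
    moreover have "epow e m \<noteq> 0" using RR_nz[of e0 e1 e2] that by (simp add: e mm epow_def)
    ultimately show False using z m by simp
  qed
  have Nnz: "Nm \<noteq> 0" unfolding Nm_def using sig_nz finite_RR by simp
  have hN: "hom l0 l1 l2 Nm (card RR * d)"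
    unfolding Nm_def by (rule hom_prod) (simp add: hom_sig hF[folded Fn_def])
  have hK: "hom l0 l1 l2 Kp NN"
    unfolding Kp_def by (rule hom_sum) (simp add: hom_sig Kh_def hom_hpart)
  have invN: "sig e' Nm = Nm" if "e' \<in> RR" for e'
  proof -
    have "sig e' Nm = (\<Prod>e\<in>RR. sig (emul e' e) Fn)" by (simp add: Nm_def sig_prod sig_sig)
    also have "\<dots> = Nm" unfolding Nm_def
      by (rule prod.reindex_bij_betw[OF emul_bij[OF that], of "\<lambda>e. sig e Fn"])
    finally show ?thesis .
  qed
  have invK: "sig e' Kp = Kp" if "e' \<in> RR" for e'
  proof -
    have "sig e' Kp = (\<Sum>e\<in>RR. sig (emul e' e) Kh)" by (simp add: Kp_def sig_sum sig_sig)
    also have "\<dots> = Kp" unfolding Kp_def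
      by (rule sum.reindex_bij_betw[OF emul_bij[OF that], of "\<lambda>e. sig e Kh"])
    finally show ?thesis .
  qed
  have dN: "w0 dvd a \<and> w1 dvd b \<and> w2 dvd c" if "c3 Nm (a,b,c) \<noteq> 0" for a b c
    using sig_inv_dvd0[OF _ invN[OF gens_RR(1)] that] sig_inv_dvd1[OF _ invN[OF gens_RR(2)] that]
      sig_inv_dvd2[OF _ invN[OF gens_RR(3)] that] w_pos by auto
  have Kf: "Kp = const3 (c3 Kp (w0,0,0)) * X0 + const3 (c3 Kp (0,w1,0)) * X1 + const3 (c3 Kp (0,0,w2)) * X2"
    using Kp_form[OF hK] sig_inv_dvd0[OF _ invK[OF gens_RR(1)]] sig_inv_dvd1[OF _ invK[OF gens_RR(2)]]
      sig_inv_dvd2[OF _ invK[OF gens_RR(3)]] w_pos by auto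
  have evN: "ev Nm z0 z1 z2 = (\<Prod>e\<in>RR. ev (sig e (fromc F)) z0 z1 z2)" for z0 z1 z2
    by (simp add: Nm_def ev_prod Fn_def)
  show ?thesis
    using Nnz hN dN TN Kf evN pF by metis
qed

end


lemma ex_minmax:
  fixes f g :: "'a \<Rightarrow> nat"
  assumes "finite S" "S \<noteq> {}"
  shows "\<exists>x\<in>S. (\<forall>y\<in>S. f x \<le> f y) \<and> (\<forall>y\<in>S. f y = f x \<longrightarrow> g y \<le> g x)"
proof -
  define m where "m = Min (f ` S)"
  define S' where "S' = {y\<in>S. f y = m}"
  have "m \<in> f ` S" unfolding m_def using assms by simp
  hence S'ne: "S' \<noteq> {}" by (auto simp: S'_def)
  have fS': "finite S'" using assms by (simp add: S'_def)
  have "Max (g ` S') \<in> g ` S'" using fS' S'ne by simp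
  then obtain x where x1: "x \<in> S'" and gx: "g x = Max (g ` S')" by auto
  have "\<forall>y\<in>S'. g y \<le> g x" using fS' gx by simp
  with x1 have x: "x \<in> S'" "\<forall>y\<in>S'. g y \<le> g x" by auto
  have "\<forall>y\<in>S. f x \<le> f y" using x assms by (auto simp: S'_def m_def)
  moreover have "\<forall>y\<in>S. f y = f x \<longrightarrow> g y \<le> g x" using x by (auto simp: S'_def)
  ultimately show ?thesis using x by (auto simp: S'_def)
qed

context fol begin

lemma indep3: "of_int a * lam + of_int b * mu + of_int c * gam = 0 \<Longrightarrow> a = 0 \<and> b = 0 \<and> c = 0"
  using indep by blast

definition "t0 m = (case m of (a,b,c) \<Rightarrow> - of_nat w0 * of_nat b * (mu+gam) - of_nat w1 * of_nat a * mu)"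
definition "t1 m = (case m of (a,b,c) \<Rightarrow> of_nat w0 * of_nat b * lam + of_nat w1 * of_nat a * (lam+gam))"
definition "t2 m = (case m of (a,b,c) \<Rightarrow> of_nat w0 * of_nat b * lam - of_nat w1 * of_nat a * mu)"

lemma I0: assumes "t0 (a,b,c) = t0 (a',b',c')" shows "a = a' \<and> b = b'"
proof -
  have "of_int 0 * lam + of_int (int w0 * int b' + int w1 * int a' - int w0 * int b - int w1 * int a) * mu
     + of_int (int w0 * int b' - int w0 * int b) * gam = 0"
    using assms by (simp add: t0_def algebra_simps)
  from indep3[OF this] have "int w0 * int b' = int w0 * int b" "int w1 * int a' = int w1 * int a"
    by auto
  thus ?thesis using w_pos by simp
qed

lemma I1: assumes "t1 (a,b,c) = t1 (a',b',c')" shows "a = a' \<and> b = b'"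
proof -
  have "of_int (int w0 * int b + int w1 * int a - int w0 * int b' - int w1 * int a') * lam
     + of_int 0 * mu + of_int (int w1 * int a - int w1 * int a') * gam = 0"
    using assms by (simp add: t1_def algebra_simps)
  from indep3[OF this] have "int w0 * int b' = int w0 * int b" "int w1 * int a' = int w1 * int a"
    by auto
  thus ?thesis using w_pos by simp
qed

lemma I2: assumes "t2 (a,b,c) = t2 (a',b',c')" shows "a = a' \<and> b = b'"
proof -
  have "of_int (int w0 * int b - int w0 * int b') * lam
     + of_int (int w1 * int a' - int w1 * int a) * mu + of_int 0 * gam = 0"
    using assms by (simp add: t2_def algebra_simps)
  from indep3[OF this] have "int w0 * int b' = int w0 * int b" "int w1 * int a' = int w1 * int a"
    by auto
  thus ?thesis using w_pos by simp
qed

lemma c3_X0: "c3 (X0 * R) (a,b,c) = (if w0 \<le> a then c3 R (a - w0, b, c) else 0)"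
  by (simp add: X0_def c3_mono3p_mult)
lemma c3_X1: "c3 (X1 * R) (a,b,c) = (if w1 \<le> b then c3 R (a, b - w1, c) else 0)"
  by (simp add: X1_def c3_mono3p_mult)
lemma c3_X2: "c3 (X2 * R) (a,b,c) = (if w2 \<le> c then c3 R (a, b, c - w2) else 0)"
  by (simp add: X2_def c3_mono3p_mult)

lemma TT_expand: "TT Q =
   X0 * (const3 (- of_nat w0 * (mu+gam)) * th 1 Q - const3 (of_nat w1 * mu) * th 0 Q)
 + X1 * (const3 (of_nat w0 * lam) * th 1 Q + const3 (of_nat w1 * (lam+gam)) * th 0 Q)
 + X2 * (const3 (of_nat w0 * lam) * th 1 Q - const3 (of_nat w1 * mu) * th 0 Q)"
  unfolding TT_def PP0_def PP1_def const3_mult const3_add const3_uminus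
  by (simp add: algebra_simps)

lemma c3_TT: "c3 (TT Q) (a,b,c) =
   (if w0 \<le> a then t0 (a - w0, b, c) * c3 Q (a - w0, b, c) else 0)
 + (if w1 \<le> b then t1 (a, b - w1, c) * c3 Q (a, b - w1, c) else 0)
 + (if w2 \<le> c then t2 (a, b, c - w2) * c3 Q (a, b, c - w2) else 0)"
  unfolding TT_expand c3_add c3_X0 c3_X1 c3_X2
  by (simp only: c3_diff c3_add c3_const3_mult c3_th) (simp add: t0_def t1_def t2_def crd_def algebra_simps)

abbreviation "Kl k0 k1 k2 \<equiv> const3 k0 * X0 + const3 k1 * X1 + const3 k2 * X2"

lemma c3_Kl: "c3 (Kl k0 k1 k2 * Q) (a,b,c) =
   (if w0 \<le> a then k0 * c3 Q (a - w0, b, c) else 0)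
 + (if w1 \<le> b then k1 * c3 Q (a, b - w1, c) else 0)
 + (if w2 \<le> c then k2 * c3 Q (a, b, c - w2) else 0)"
proof -
  have "Kl k0 k1 k2 * Q = X0 * (const3 k0 * Q) + X1 * (const3 k1 * Q) + X2 * (const3 k2 * Q)"
    by (simp add: algebra_simps)
  thus ?thesis by (simp add: c3_X0 c3_X1 c3_X2)
qed

lemma E0: assumes T: "TT Q = Kl k0 k1 k2 * Q" and nz: "c3 Q (a,b,c) \<noteq> 0"
  and c1: "w1 \<le> b \<Longrightarrow> c3 Q (a + w0, b - w1, c) = 0"
  and c2: "w2 \<le> c \<Longrightarrow> c3 Q (a + w0, b, c - w2) = 0"
  shows "t0 (a,b,c) = k0"
proof -
  have "c3 (TT Q) (a + w0, b, c) = c3 (Kl k0 k1 k2 * Q) (a + w0, b, c)" using T by simp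
  hence "t0 (a,b,c) * c3 Q (a,b,c) = k0 * c3 Q (a,b,c)"
    unfolding c3_TT c3_Kl using c1 c2 by (auto split: if_splits)
  thus ?thesis using nz by simp
qed

lemma E1: assumes T: "TT Q = Kl k0 k1 k2 * Q" and nz: "c3 Q (a,b,c) \<noteq> 0"
  and c1: "w0 \<le> a \<Longrightarrow> c3 Q (a - w0, b + w1, c) = 0"
  and c2: "w2 \<le> c \<Longrightarrow> c3 Q (a, b + w1, c - w2) = 0"
  shows "t1 (a,b,c) = k1"
proof -
  have "c3 (TT Q) (a, b + w1, c) = c3 (Kl k0 k1 k2 * Q) (a, b + w1, c)" using T by simp
  hence "t1 (a,b,c) * c3 Q (a,b,c) = k1 * c3 Q (a,b,c)"
    unfolding c3_TT c3_Kl using c1 c2 by (auto split: if_splits)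
  thus ?thesis using nz by simp
qed

lemma E2: assumes T: "TT Q = Kl k0 k1 k2 * Q" and nz: "c3 Q (a,b,c) \<noteq> 0"
  and c1: "w0 \<le> a \<Longrightarrow> c3 Q (a - w0, b, c + w2) = 0"
  and c2: "w1 \<le> b \<Longrightarrow> c3 Q (a, b - w1, c + w2) = 0"
  shows "t2 (a,b,c) = k2"
proof -
  have "c3 (TT Q) (a, b, c + w2) = c3 (Kl k0 k1 k2 * Q) (a, b, c + w2)" using T by simp
  hence "t2 (a,b,c) * c3 Q (a,b,c) = k2 * c3 Q (a,b,c)"
    unfolding c3_TT c3_Kl using c1 c2 by (auto split: if_splits)
  thus ?thesis using nz by simp
qed

lemma supp_ne: "Q \<noteq> 0 \<Longrightarrow> {m. c3 Q m \<noteq> 0} \<noteq> {}"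
  by (metis (mono_tags, lifting) Collect_empty_eq P3_eqI c3_zero)

lemma sel: fixes f g :: "mono3 \<Rightarrow> nat" assumes "Q \<noteq> 0"
  obtains a b c where "c3 Q (a,b,c) \<noteq> 0" "\<And>a' b' c'. c3 Q (a',b',c') \<noteq> 0 \<Longrightarrow> f (a,b,c) \<le> f (a',b',c')"
    "\<And>a' b' c'. c3 Q (a',b',c') \<noteq> 0 \<Longrightarrow> f (a',b',c') = f (a,b,c) \<Longrightarrow> g (a',b',c') \<le> g (a,b,c)"
proof -
  obtain x where x: "x \<in> {m. c3 Q m \<noteq> 0}" "\<forall>y\<in>{m. c3 Q m \<noteq> 0}. f x \<le> f y"
     "\<forall>y\<in>{m. c3 Q m \<noteq> 0}. f y = f x \<longrightarrow> g y \<le> g x"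
    using ex_minmax[OF fin_c3 supp_ne[OF assms], of f g] by blast
  obtain a b c where "x = (a,b,c)" by (cases x)
  thus ?thesis using that x by auto
qed

lemma sel0b: assumes T: "TT Q = Kl k0 k1 k2 * Q" and nz: "Q \<noteq> 0"
  obtains a b c where "c3 Q (a,b,c) \<noteq> 0" "t0 (a,b,c) = k0" "\<And>a' b' c'. c3 Q (a',b',c') \<noteq> 0 \<Longrightarrow> b \<le> b'"
proof -
  obtain a b c where n: "c3 Q (a,b,c) \<noteq> 0"
    and mn: "\<And>a' b' c'. c3 Q (a',b',c') \<noteq> 0 \<Longrightarrow> (\<lambda>(a,b,c). b) (a,b,c) \<le> (\<lambda>(a,b,c). b) (a',b',c')"
    and mx: "\<And>a' b' c'. c3 Q (a',b',c') \<noteq> 0 \<Longrightarrow> (\<lambda>(a,b,c). b) (a',b',c') = (\<lambda>(a,b,c). b) (a,b,c)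
        \<Longrightarrow> (\<lambda>(a,b,c). a) (a',b',c') \<le> (\<lambda>(a,b,c). a) (a,b,c)"
    using sel[OF nz, of "\<lambda>(a,b,c). b" "\<lambda>(a,b,c). a"] by blast
  have "t0 (a,b,c) = k0"
  proof (rule E0[OF T n])
    assume "w1 \<le> b" thus "c3 Q (a + w0, b - w1, c) = 0" using mn[of "a+w0" "b-w1" c] w_pos by force
  next
    assume "w2 \<le> c" thus "c3 Q (a + w0, b, c - w2) = 0" using mx[of "a+w0" b "c-w2"] w_pos by force
  qed
  thus ?thesis using that n mn by force
qed

lemma sel0c: assumes T: "TT Q = Kl k0 k1 k2 * Q" and nz: "Q \<noteq> 0"
  obtains a b c where "c3 Q (a,b,c) \<noteq> 0" "t0 (a,b,c) = k0" "\<And>a' b' c'. c3 Q (a',b',c') \<noteq> 0 \<Longrightarrow> c \<le> c'"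
proof -
  obtain a b c where n: "c3 Q (a,b,c) \<noteq> 0"
    and mn: "\<And>a' b' c'. c3 Q (a',b',c') \<noteq> 0 \<Longrightarrow> (\<lambda>(a,b,c). c) (a,b,c) \<le> (\<lambda>(a,b,c). c) (a',b',c')"
    and mx: "\<And>a' b' c'. c3 Q (a',b',c') \<noteq> 0 \<Longrightarrow> (\<lambda>(a,b,c). c) (a',b',c') = (\<lambda>(a,b,c). c) (a,b,c)
        \<Longrightarrow> (\<lambda>(a,b,c). a) (a',b',c') \<le> (\<lambda>(a,b,c). a) (a,b,c)"
    using sel[OF nz, of "\<lambda>(a,b,c). c" "\<lambda>(a,b,c). a"] by blast
  have "t0 (a,b,c) = k0"
  proof (rule E0[OF T n])
    assume "w1 \<le> b" thus "c3 Q (a + w0, b - w1, c) = 0" using mx[of "a+w0" "b-w1" c] w_pos by force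
  next
    assume "w2 \<le> c" thus "c3 Q (a + w0, b, c - w2) = 0" using mn[of "a+w0" b "c-w2"] w_pos by force
  qed
  thus ?thesis using that n mn by force
qed

lemma sel1b: assumes T: "TT Q = Kl k0 k1 k2 * Q" and nz: "Q \<noteq> 0"
  obtains a b c where "c3 Q (a,b,c) \<noteq> 0" "t1 (a,b,c) = k1" "\<And>a' b' c'. c3 Q (a',b',c') \<noteq> 0 \<Longrightarrow> a \<le> a'"
proof -
  obtain a b c where n: "c3 Q (a,b,c) \<noteq> 0"
    and mn: "\<And>a' b' c'. c3 Q (a',b',c') \<noteq> 0 \<Longrightarrow> (\<lambda>(a,b,c). a) (a,b,c) \<le> (\<lambda>(a,b,c). a) (a',b',c')"
    and mx: "\<And>a' b' c'. c3 Q (a',b',c') \<noteq> 0 \<Longrightarrow> (\<lambda>(a,b,c). a) (a',b',c') = (\<lambda>(a,b,c). a) (a,b,c)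
        \<Longrightarrow> (\<lambda>(a,b,c). b) (a',b',c') \<le> (\<lambda>(a,b,c). b) (a,b,c)"
    using sel[OF nz, of "\<lambda>(a,b,c). a" "\<lambda>(a,b,c). b"] by blast
  have "t1 (a,b,c) = k1"
  proof (rule E1[OF T n])
    assume "w0 \<le> a" thus "c3 Q (a - w0, b + w1, c) = 0" using mn[of "a-w0" "b+w1" c] w_pos by force
  next
    assume "w2 \<le> c" thus "c3 Q (a, b + w1, c - w2) = 0" using mx[of a "b+w1" "c-w2"] w_pos by force
  qed
  thus ?thesis using that n mn by force
qed

lemma sel1c: assumes T: "TT Q = Kl k0 k1 k2 * Q" and nz: "Q \<noteq> 0"
  obtains a b c where "c3 Q (a,b,c) \<noteq> 0" "t1 (a,b,c) = k1" "\<And>a' b' c'. c3 Q (a',b',c') \<noteq> 0 \<Longrightarrow> c \<le> c'"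
proof -
  obtain a b c where n: "c3 Q (a,b,c) \<noteq> 0"
    and mn: "\<And>a' b' c'. c3 Q (a',b',c') \<noteq> 0 \<Longrightarrow> (\<lambda>(a,b,c). c) (a,b,c) \<le> (\<lambda>(a,b,c). c) (a',b',c')"
    and mx: "\<And>a' b' c'. c3 Q (a',b',c') \<noteq> 0 \<Longrightarrow> (\<lambda>(a,b,c). c) (a',b',c') = (\<lambda>(a,b,c). c) (a,b,c)
        \<Longrightarrow> (\<lambda>(a,b,c). b) (a',b',c') \<le> (\<lambda>(a,b,c). b) (a,b,c)"
    using sel[OF nz, of "\<lambda>(a,b,c). c" "\<lambda>(a,b,c). b"] by blast
  have "t1 (a,b,c) = k1"
  proof (rule E1[OF T n])
    assume "w0 \<le> a" thus "c3 Q (a - w0, b + w1, c) = 0" using mx[of "a-w0" "b+w1" c] w_pos by force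
  next
    assume "w2 \<le> c" thus "c3 Q (a, b + w1, c - w2) = 0" using mn[of a "b+w1" "c-w2"] w_pos by force
  qed
  thus ?thesis using that n mn by force
qed

lemma sel2b: assumes T: "TT Q = Kl k0 k1 k2 * Q" and nz: "Q \<noteq> 0"
  obtains a b c where "c3 Q (a,b,c) \<noteq> 0" "t2 (a,b,c) = k2" "\<And>a' b' c'. c3 Q (a',b',c') \<noteq> 0 \<Longrightarrow> a \<le> a'"
proof -
  obtain a b c where n: "c3 Q (a,b,c) \<noteq> 0"
    and mn: "\<And>a' b' c'. c3 Q (a',b',c') \<noteq> 0 \<Longrightarrow> (\<lambda>(a,b,c). a) (a,b,c) \<le> (\<lambda>(a,b,c). a) (a',b',c')"
    and mx: "\<And>a' b' c'. c3 Q (a',b',c') \<noteq> 0 \<Longrightarrow> (\<lambda>(a,b,c). a) (a',b',c') = (\<lambda>(a,b,c). a) (a,b,c)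
        \<Longrightarrow> (\<lambda>(a,b,c). c) (a',b',c') \<le> (\<lambda>(a,b,c). c) (a,b,c)"
    using sel[OF nz, of "\<lambda>(a,b,c). a" "\<lambda>(a,b,c). c"] by blast
  have "t2 (a,b,c) = k2"
  proof (rule E2[OF T n])
    assume "w0 \<le> a" thus "c3 Q (a - w0, b, c + w2) = 0" using mn[of "a-w0" b "c+w2"] w_pos by force
  next
    assume "w1 \<le> b" thus "c3 Q (a, b - w1, c + w2) = 0" using mx[of a "b-w1" "c+w2"] w_pos by force
  qed
  thus ?thesis using that n mn by force
qed

lemma sel2c: assumes T: "TT Q = Kl k0 k1 k2 * Q" and nz: "Q \<noteq> 0"
  obtains a b c where "c3 Q (a,b,c) \<noteq> 0" "t2 (a,b,c) = k2" "\<And>a' b' c'. c3 Q (a',b',c') \<noteq> 0 \<Longrightarrow> b \<le> b'"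
proof -
  obtain a b c where n: "c3 Q (a,b,c) \<noteq> 0"
    and mn: "\<And>a' b' c'. c3 Q (a',b',c') \<noteq> 0 \<Longrightarrow> (\<lambda>(a,b,c). b) (a,b,c) \<le> (\<lambda>(a,b,c). b) (a',b',c')"
    and mx: "\<And>a' b' c'. c3 Q (a',b',c') \<noteq> 0 \<Longrightarrow> (\<lambda>(a,b,c). b) (a',b',c') = (\<lambda>(a,b,c). b) (a,b,c)
        \<Longrightarrow> (\<lambda>(a,b,c). c) (a',b',c') \<le> (\<lambda>(a,b,c). c) (a,b,c)"
    using sel[OF nz, of "\<lambda>(a,b,c). b" "\<lambda>(a,b,c). c"] by blast
  have "t2 (a,b,c) = k2"
  proof (rule E2[OF T n])
    assume "w0 \<le> a" thus "c3 Q (a - w0, b, c + w2) = 0" using mx[of "a-w0" b "c+w2"] w_pos by force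
  next
    assume "w1 \<le> b" thus "c3 Q (a, b - w1, c + w2) = 0" using mn[of a "b-w1" "c+w2"] w_pos by force
  qed
  thus ?thesis using that n mn by force
qed

end


context fol begin

lemma TT_power: "TT (Q ^ Suc n) = const3 (of_nat (Suc n)) * Q ^ n * TT Q"
proof (induction n)
  case 0 then show ?case by simp
next
  case (Suc n)
  have "TT (Q ^ Suc (Suc n)) = TT Q * Q ^ Suc n + Q * TT (Q ^ Suc n)"
    unfolding power_Suc[of Q "Suc n"] by (rule TT_mult)
  also have "\<dots> = const3 (of_nat (Suc (Suc n))) * Q ^ Suc n * TT Q"
    using Suc.IH unfolding const3_of_nat unfolding of_nat_Suc power_Suc by (simp add: algebra_simps)
  finally show ?case .
qed

lemma TT_mono: "TT (mono3p (a,b,c)) =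
   (const3 (of_nat w0 * of_nat b) * PP0 - const3 (of_nat w1 * of_nat a) * PP1) * mono3p (a,b,c)"
  unfolding TT_def th_mono3p const3_mult by (simp add: crd_def algebra_simps)

lemma th_X: "th 0 X0 = const3 (of_nat w0) * X0" "th 1 X0 = 0" "th 0 X1 = 0"
   "th 1 X1 = const3 (of_nat w1) * X1" "th 0 X2 = 0" "th 1 X2 = 0"
  by (simp_all add: X0_def X1_def X2_def th_mono3p crd_def)

lemma TT_G: "TT Gn = const3 (of_nat w0 * of_nat w1) * (const3 lam * X1 - const3 mu * X0) * Gn"
proof -
  have "TT Gn = const3 (of_nat w0) * PP0 * (const3 (of_nat w1) * X1)
              - const3 (of_nat w1) * PP1 * (const3 (of_nat w0) * X0)"
    unfolding TT_def Gn_def th_add th_X by simp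
  also have "\<dots> = const3 (of_nat w0 * of_nat w1) * (const3 lam * X1 - const3 mu * X0) * Gn"
    unfolding PP0_def PP1_def Gn_def const3_mult const3_add by (simp add: algebra_simps)
  finally show ?thesis .
qed

lemma TT_Gpow: "TT (Gn ^ e) = const3 (of_nat e * of_nat w0 * of_nat w1) * (const3 lam * X1 - const3 mu * X0) * Gn ^ e"
proof (cases e)
  case 0 then show ?thesis by (simp add: TT_one)
next
  case (Suc n)
  show ?thesis unfolding Suc unfolding TT_power unfolding TT_G unfolding const3_mult power_Suc
    by (simp add: algebra_simps)
qed

lemma TT_h: "TT (mono3p (a,b,c) * Gn ^ e) =
  (const3 (of_nat w0 * of_nat b) * PP0 - const3 (of_nat w1 * of_nat a) * PP1
   + const3 (of_nat e * of_nat w0 * of_nat w1) * (const3 lam * X1 - const3 mu * X0)) * (mono3p (a,b,c) * Gn ^ e)"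
  unfolding TT_mult TT_mono TT_Gpow by (simp add: algebra_simps)

lemma Gpow1: "c3 (Gn ^ e) (w0 * e, 0, 0) = 1"
proof (induction e)
  case 0 then show ?case by (simp add: c3_mono3p flip: mono3p_0)
next
  case (Suc e)
  have "Gn ^ Suc e = X0 * Gn ^ e + X1 * Gn ^ e + X2 * Gn ^ e" by (simp add: Gn_def algebra_simps)
  hence "c3 (Gn ^ Suc e) (w0 * Suc e, 0, 0) = c3 (Gn ^ e) (w0 * e, 0, 0)"
    using w_pos by (simp add: c3_X0 c3_X1 c3_X2)
  thus ?case using Suc by simp
qed

lemma hom_Gn: "hom l0 l1 l2 Gn NN"
  by (simp add: Gn_def hom_add hom_X)

lemma newton:
  assumes Qnz: "Q \<noteq> 0" and hQ: "hom l0 l1 l2 Q D"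
    and dv: "\<forall>a b c. c3 Q (a,b,c) \<noteq> 0 \<longrightarrow> w0 dvd a \<and> w1 dvd b \<and> w2 dvd c"
    and T: "TT Q = Kl k0 k1 k2 * Q"
  shows "\<exists>cc m0 m1 m2 e. cc \<noteq> 0 \<and> Q = const3 cc * (mono3p (m0,m1,m2) * Gn ^ e)"
proof -
  have hd: "l0 * a + l1 * b + l2 * c = D" if "c3 Q (a,b,c) \<noteq> 0" for a b c
    using hQ that by (auto simp: hom_def wdeg_def)
  obtain a0 b0 c0 where A: "c3 Q (a0,b0,c0) \<noteq> 0" "t0 (a0,b0,c0) = k0"
    and minb: "\<And>a' b' c'. c3 Q (a',b',c') \<noteq> 0 \<Longrightarrow> b0 \<le> b'"
    using sel0b[OF T Qnz] by blast
  obtain a0' b0' c0' where A': "c3 Q (a0',b0',c0') \<noteq> 0" "t0 (a0',b0',c0') = k0"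
    and minc: "\<And>a' b' c'. c3 Q (a',b',c') \<noteq> 0 \<Longrightarrow> c0' \<le> c'"
    using sel0c[OF T Qnz] by blast
  have "a0 = a0' \<and> b0 = b0'" using I0[of a0 b0 c0 a0' b0' c0'] A(2) A'(2) by simp
  moreover have "l0 * a0 + l1 * b0 + l2 * c0 = l0 * a0' + l1 * b0' + l2 * c0'"
    using hd[OF A(1)] hd[OF A'(1)] by simp
  ultimately have "c0 = c0'" using l2pos by auto
  hence minc0: "\<And>a' b' c'. c3 Q (a',b',c') \<noteq> 0 \<Longrightarrow> c0 \<le> c'" using minc by simp
  obtain a1 b1 c1 where B: "c3 Q (a1,b1,c1) \<noteq> 0" "t1 (a1,b1,c1) = k1"
    and mina: "\<And>a' b' c'. c3 Q (a',b',c') \<noteq> 0 \<Longrightarrow> a1 \<le> a'"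
    using sel1b[OF T Qnz] by blast
  obtain a1' b1' c1' where B': "c3 Q (a1',b1',c1') \<noteq> 0" "t1 (a1',b1',c1') = k1"
    and minc': "\<And>a' b' c'. c3 Q (a',b',c') \<noteq> 0 \<Longrightarrow> c1' \<le> c'"
    using sel1c[OF T Qnz] by blast
  have "a1 = a1' \<and> b1 = b1'" using I1[of a1 b1 c1 a1' b1' c1'] B(2) B'(2) by simp
  moreover have "l0 * a1 + l1 * b1 + l2 * c1 = l0 * a1' + l1 * b1' + l2 * c1'"
    using hd[OF B(1)] hd[OF B'(1)] by simp
  ultimately have "c1 = c1'" using l2pos by auto
  hence "c1 = c0" using minc'[OF A(1)] minc0[OF B(1)] by simp
  note B = B[unfolded this]
  obtain a2 b2 c2 where C: "c3 Q (a2,b2,c2) \<noteq> 0" "t2 (a2,b2,c2) = k2"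
    and mina2: "\<And>a' b' c'. c3 Q (a',b',c') \<noteq> 0 \<Longrightarrow> a2 \<le> a'"
    using sel2b[OF T Qnz] by blast
  obtain a2' b2' c2' where C': "c3 Q (a2',b2',c2') \<noteq> 0" "t2 (a2',b2',c2') = k2"
    and minb2: "\<And>a' b' c'. c3 Q (a',b',c') \<noteq> 0 \<Longrightarrow> b2' \<le> b'"
    using sel2c[OF T Qnz] by blast
  have ab2: "a2 = a2' \<and> b2 = b2'" using I2[of a2 b2 c2 a2' b2' c2'] C(2) C'(2) by simp
  have a2: "a2 = a1" using mina2[OF B(1)] mina[OF C(1)] by simp
  have b2: "b2 = b0" using ab2 minb2[OF A(1)] minb[OF C(1)] by simp
  have k2: "k2 = t2 (a1, b0, c2)" using C(2) a2 b2 by simp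
  have a10: "a1 \<le> a0" using mina[OF A(1)] .
  have b01: "b0 \<le> b1" using minb[OF B(1)] .
  have "w0 dvd a0" "w0 dvd a1" using dv A(1) B(1) by auto
  hence "w0 dvd (a0 - a1)" by (rule dvd_diff_nat)
  then obtain e where e: "a0 - a1 = w0 * e" by (auto elim: dvdE)
  have a0e: "a0 = a1 + w0 * e" using e a10 by simp
  have "l0 * a0 + l1 * b0 + l2 * c0 = l0 * a1 + l1 * b1 + l2 * c0"
    using hd[OF A(1)] hd[OF B(1)] by simp
  hence "l0 * w0 * e + l1 * b0 = l1 * b1" unfolding a0e by (simp add: algebra_simps)
  hence "l1 * (w1 * e + b0) = l1 * b1" using lw by (simp add: algebra_simps)
  hence b1e: "b1 = b0 + w1 * e" using l1pos by simp
  define h where "h = mono3p (a1,b0,c0) * Gn ^ e"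
  have Th: "TT h = Kl k0 k1 k2 * h"
  proof -
    have k0: "k0 = - of_nat w0 * of_nat b0 * (mu+gam) - of_nat w1 * (of_nat a1 + of_nat w0 * of_nat e) * mu"
      using A(2) by (simp add: t0_def a0e)
    have k1: "k1 = of_nat w0 * (of_nat b0 + of_nat w1 * of_nat e) * lam + of_nat w1 * of_nat a1 * (lam+gam)"
      using B(2) by (simp add: t1_def b1e)
    have k2': "k2 = of_nat w0 * of_nat b0 * lam - of_nat w1 * of_nat a1 * mu"
      using k2 by (simp add: t2_def)
    show ?thesis unfolding h_def TT_h k0 k1 k2' PP0_def PP1_def const3_mult const3_add const3_diff
      const3_uminus by (simp add: algebra_simps)
  qed
  have hh: "hom l0 l1 l2 h D"
  proof -
    have "hom l0 l1 l2 h (wdeg l0 l1 l2 (a1,b0,c0) + e * NN)"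
      unfolding h_def by (intro hom_mult hom_mono3p hom_power hom_Gn)
    moreover have "wdeg l0 l1 l2 (a1,b0,c0) + e * NN = D"
      using hd[OF A(1)] lw by (simp add: wdeg_def a0e algebra_simps)
    ultimately show ?thesis by simp
  qed
  have h1: "c3 h (a0,b0,c0) = 1"
    unfolding h_def c3_mono3p_mult using a10 Gpow1[of e] by (simp add: e mult.commute)
  define cc where "cc = c3 Q (a0,b0,c0)"
  define g where "g = Q - const3 cc * h"
  have Tg: "TT g = Kl k0 k1 k2 * g"
    unfolding g_def TT_diff TT_const3_mult T Th by (simp add: algebra_simps)
  have hg: "hom l0 l1 l2 g D" unfolding g_def by (intro hom_diff hQ hom_const3_mult hh)
  have g0: "c3 g (a0,b0,c0) = 0" by (simp add: g_def cc_def h1)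
  have "g = 0"
  proof (rule ccontr)
    assume gnz: "g \<noteq> 0"
    obtain x y z where X: "c3 g (x,y,z) \<noteq> 0" "t0 (x,y,z) = k0"
      using sel0b[OF Tg gnz] by blast
    have xy: "x = a0 \<and> y = b0" using I0[of x y z a0 b0 c0] X(2) A(2) by simp
    have "l0 * x + l1 * y + l2 * z = D" using hg X(1) by (auto simp: hom_def wdeg_def)
    hence "z = c0" using xy hd[OF A(1)] l2pos by auto
    thus False using X(1) xy g0 by simp
  qed
  hence "Q = const3 cc * (mono3p (a1,b0,c0) * Gn ^ e)" by (simp add: g_def h_def)
  moreover have "cc \<noteq> 0" using A(1) by (simp add: cc_def)
  ultimately show ?thesis by blast
qed

end


lemma exists_root: assumes "n > 0" "(x::complex) \<noteq> 0" shows "\<exists>z. z ^ n = x"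
proof -
  have "card {z::complex. z ^ n = x} = n" using card_nth_roots assms by blast
  hence "{z::complex. z ^ n = x} \<noteq> {}" using assms(1) by (metis card.empty less_irrefl)
  thus ?thesis by auto
qed

theorem proposition4p4:
  fixes l0 l1 l2 :: nat and lam mu gam :: complex
  assumes "coprime l0 l1" and "coprime l0 l2" and "coprime l1 l2"
    and "1 \<le> l0" and "l0 \<le> l1" and "l1 \<le> l2"
    and "\<forall>a b c :: int. of_int a * lam + of_int b * mu + of_int c * gam = 0
            \<longrightarrow> a = 0 \<and> b = 0 \<and> c = 0"
  shows "\<exists>z0 z1 z2. z0 \<noteq> 0 \<and> z1 \<noteq> 0 \<and> z2 \<noteq> 0 \<and>
           fol_singular (beta_fol l0 l1 l2 lam mu gam) z0 z1 z2 \<and>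
           (\<forall>F. invariant_curve l0 l1 l2 (beta_fol l0 l1 l2 lam mu gam) F
                  \<longrightarrow> eval3 F z0 z1 z2 \<noteq> 0)"
proof -
  interpret fol l0 l1 l2 lam mu gam
    using assms by unfold_locales auto
  have lnz: "lam \<noteq> 0" using indep3[of 1 0 0] by auto
  have mnz: "mu \<noteq> 0" using indep3[of 0 1 0] by auto
  have gnz: "gam \<noteq> 0" using indep3[of 0 0 1] by auto
  have snz: "lam + mu + gam \<noteq> 0" using indep3[of 1 1 1] by auto
  obtain z0 where z0: "z0 ^ w0 = lam" using exists_root[of w0 lam] w_pos lnz by auto
  obtain z1 where z1: "z1 ^ w1 = mu" using exists_root[of w1 mu] w_pos mnz by auto
  obtain z2 where z2: "z2 ^ w2 = gam" using exists_root[of w2 gam] w_pos gnz by auto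
  have z0nz: "z0 \<noteq> 0" using z0 lnz w_pos by (auto simp: power_0_left)
  have z1nz: "z1 \<noteq> 0" using z1 mnz w_pos by (auto simp: power_0_left)
  have z2nz: "z2 \<noteq> 0" using z2 gnz w_pos by (auto simp: power_0_left)
  have evX: "ev X0 z0 z1 z2 = lam" "ev X1 z0 z1 z2 = mu" "ev X2 z0 z1 z2 = gam"
    by (simp_all add: X0_def X1_def X2_def z0 z1 z2)
  have evG: "ev Gn z0 z1 z2 = lam + mu + gam" by (simp add: Gn_def evX)
  have sing: "fol_singular (beta_fol l0 l1 l2 lam mu gam) z0 z1 z2"
    unfolding fol_singular_def
  proof (intro conjI allI impI)
    show "(z0, z1, z2) \<noteq> (0, 0, 0)" using z0nz by simp
  next
    fix i :: nat assume "i \<le> 2"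
    hence "i = 0 \<or> i = 1 \<or> i = 2" by auto
    thus "eval3 (beta_fol l0 l1 l2 lam mu gam i) z0 z1 z2 = 0"
    proof (elim disjE)
      assume i: "i = 0"
      show ?thesis unfolding i eval3_ev[OF is_poly3_beta] An0
        by (simp add: PP0_def evX algebra_simps)
    next
      assume i: "i = 1"
      show ?thesis unfolding i eval3_ev[OF is_poly3_beta] An1
        by (simp add: PP1_def evX algebra_simps)
    next
      assume i: "i = 2"
      show ?thesis unfolding i eval3_ev[OF is_poly3_beta] An2
        by (simp add: PP2_def evX algebra_simps)
    qed
  qed
  have inv: "eval3 F z0 z1 z2 \<noteq> 0"
    if F: "invariant_curve l0 l1 l2 (beta_fol l0 l1 l2 lam mu gam) F" for F
  proof -
    obtain Nm D k0 k1 k2 where Nnz: "Nm \<noteq> 0" and hN: "hom l0 l1 l2 Nm D"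
      and dN: "\<forall>a b c. c3 Nm (a,b,c) \<noteq> 0 \<longrightarrow> w0 dvd a \<and> w1 dvd b \<and> w2 dvd c"
      and TN: "TT Nm = (const3 k0 * X0 + const3 k1 * X1 + const3 k2 * X2) * Nm"
      and evN: "\<forall>z0 z1 z2. ev Nm z0 z1 z2 = (\<Prod>e\<in>RR. ev (sig e (fromc F)) z0 z1 z2)"
      and pF: "is_poly3 F"
      using norm_result[OF F] by blast
    obtain cc m0 m1 m2 e where cc: "cc \<noteq> 0" and Nf: "Nm = const3 cc * (mono3p (m0,m1,m2) * Gn ^ e)"
      using newton[OF Nnz hN dN TN] by blast
    have "ev Nm z0 z1 z2 = cc * (z0 ^ m0 * z1 ^ m1 * z2 ^ m2 * (lam + mu + gam) ^ e)"
      by (simp add: Nf evG)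
    hence "ev Nm z0 z1 z2 \<noteq> 0" using cc z0nz z1nz z2nz snz by simp
    hence "(\<Prod>e\<in>RR. ev (sig e (fromc F)) z0 z1 z2) \<noteq> 0" using evN by simp
    hence "ev (sig (1,1,1) (fromc F)) z0 z1 z2 \<noteq> 0"
      using one_RR finite_RR by (simp add: prod_zero_iff)
    thus ?thesis by (simp add: sig_111 eval3_ev[OF pF])
  qed
  show ?thesis using z0nz z1nz z2nz sing inv by blast
qed


end
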